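(* Fix a positive integer $n$, let $x=(x_1,\dots,x_n)$, and let $\lambda$ be a partition with at most $n$ rows. Then $$s_\lambda(x\,\|\,a)=\sum_T\prod_{\substack{\alpha\in\lambda\\ T(\alpha)\text{ unprimed}}}x_{T(\alpha)}\prod_{\substack{\alpha\in\lambda\\ T(\alpha)\text{ primed}}}\big(-a_{T(\alpha)}\big),$$ summed over all reverse $\lambda$-supertableaux $T$ (for a primed entry $k'$, $a_{T(\alpha)}$ means $a_k$).
   Context: $a=(a_i)_{i\in\mathbb{Z}}$ are independent variables. Partitions are identified with Young diagrams; box $(i,j)$ has content $c(\alpha)=j-i$; $\lambda'_j$ is the length of column $j$. The double Schur polynomial is $s_\lambda(x\,\|\,a)=\sum_T\prod_{\alpha\in\lambda}(x_{T(\alpha)}-a_{T(\alpha)-c(\alpha)})$ summed over reverse $\lambda$-tableaux $T$ (entries in $\{1,\dots,n\}$, weakly decreasing along rows, strictly decreasing down columns). A reverse $\lambda$-supertableau is a filling of $\lambda$ with symbols from $\{1,\dots,n\}\cup\{k':k\in\mathbb{Z},\ k\le n\}$ such that: in each row (resp. column) every primed symbol lies to the right of (resp. below) every unprimed symbol; unprimed symbols weakly decrease along rows and strictly decrease down columns; primed symbols strictly decrease along rows and weakly decrease down columns (comparing $k'$ by $k$); and every primed symbol $k'$ in column $j$ satisfies $k\ge\lambda'_j-j+1$. *)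

theory Defs
  imports Main
begin

text \<open>A partition is a weakly decreasing list of positive naturals (its rows, top to bottom).
Boxes are pairs (i,j) with 1-based row i and column j.\<close>

definition is_partition :: "nat list \<Rightarrow> bool" where
  "is_partition lam \<longleftrightarrow> sorted_wrt (\<ge>) lam \<and> (\<forall>r\<in>set lam. 0 < r)"

definition diagram :: "nat list \<Rightarrow> (nat \<times> nat) set" where
  "diagram lam = {(i, j). 1 \<le> i \<and> i \<le> length lam \<and> 1 \<le> j \<and> j \<le> lam ! (i - 1)}"

definition content :: "nat \<times> nat \<Rightarrow> int" where
  "content \<alpha> = int (snd \<alpha>) - int (fst \<alpha>)"

definition col_len :: "nat list \<Rightarrow> nat \<Rightarrow> nat" where
  "col_len lam j = card {i. (i, j) \<in> diagram lam}"

definition reverse_tableau :: "nat \<Rightarrow> nat list \<Rightarrow> (nat \<times> nat \<Rightarrow> nat) \<Rightarrow> bool" where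
  "reverse_tableau n lam T \<longleftrightarrow>
     (\<forall>\<alpha>. \<alpha> \<notin> diagram lam \<longrightarrow> T \<alpha> = 0) \<and>
     (\<forall>\<alpha>\<in>diagram lam. 1 \<le> T \<alpha> \<and> T \<alpha> \<le> n) \<and>
     (\<forall>i j j'. (i, j) \<in> diagram lam \<longrightarrow> (i, j') \<in> diagram lam \<longrightarrow> j < j' \<longrightarrow> T (i, j') \<le> T (i, j)) \<and>
     (\<forall>i i' j. (i, j) \<in> diagram lam \<longrightarrow> (i', j) \<in> diagram lam \<longrightarrow> i < i' \<longrightarrow> T (i', j) < T (i, j))"

definition double_schur :: "nat \<Rightarrow> nat list \<Rightarrow> (nat \<Rightarrow> 'r::comm_ring_1) \<Rightarrow> (int \<Rightarrow> 'r) \<Rightarrow> 'r" where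
  "double_schur n lam x a =
     (\<Sum>T\<in>{T. reverse_tableau n lam T}.
        \<Prod>\<alpha>\<in>diagram lam. x (T \<alpha>) - a (int (T \<alpha>) - content \<alpha>))"

text \<open>Symbols for supertableaux: unprimed k (k in {1..n}) and primed k' (k integer, k \<le> n).\<close>

datatype sym = Unpr nat | Pr int

definition reverse_supertableau :: "nat \<Rightarrow> nat list \<Rightarrow> (nat \<times> nat \<Rightarrow> sym) \<Rightarrow> bool" where
  "reverse_supertableau n lam T \<longleftrightarrow>
     (\<forall>\<alpha>. \<alpha> \<notin> diagram lam \<longrightarrow> T \<alpha> = Unpr 0) \<and>
     (\<forall>\<alpha>\<in>diagram lam. \<forall>k. T \<alpha> = Unpr k \<longrightarrow> 1 \<le> k \<and> k \<le> n) \<and>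
     (\<forall>\<alpha>\<in>diagram lam. \<forall>k. T \<alpha> = Pr k \<longrightarrow> k \<le> int n) \<and>
     \<comment> \<open>in each row, primed symbols lie to the right of unprimed ones\<close>
     (\<forall>i j j' k k'. (i, j) \<in> diagram lam \<longrightarrow> (i, j') \<in> diagram lam \<longrightarrow>
        T (i, j) = Pr k \<longrightarrow> T (i, j') = Unpr k' \<longrightarrow> j' < j) \<and>
     \<comment> \<open>in each column, primed symbols lie below unprimed ones\<close>
     (\<forall>i i' j k k'. (i, j) \<in> diagram lam \<longrightarrow> (i', j) \<in> diagram lam \<longrightarrow>
        T (i, j) = Pr k \<longrightarrow> T (i', j) = Unpr k' \<longrightarrow> i' < i) \<and>
     \<comment> \<open>unprimed: weakly decreasing along rows\<close>
     (\<forall>i j j' k k'. (i, j) \<in> diagram lam \<longrightarrow> (i, j') \<in> diagram lam \<longrightarrow> j < j' \<longrightarrow>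
        T (i, j) = Unpr k \<longrightarrow> T (i, j') = Unpr k' \<longrightarrow> k' \<le> k) \<and>
     \<comment> \<open>unprimed: strictly decreasing down columns\<close>
     (\<forall>i i' j k k'. (i, j) \<in> diagram lam \<longrightarrow> (i', j) \<in> diagram lam \<longrightarrow> i < i' \<longrightarrow>
        T (i, j) = Unpr k \<longrightarrow> T (i', j) = Unpr k' \<longrightarrow> k' < k) \<and>
     \<comment> \<open>primed: strictly decreasing along rows\<close>
     (\<forall>i j j' k k'. (i, j) \<in> diagram lam \<longrightarrow> (i, j') \<in> diagram lam \<longrightarrow> j < j' \<longrightarrow>
        T (i, j) = Pr k \<longrightarrow> T (i, j') = Pr k' \<longrightarrow> k' < k) \<and>
     \<comment> \<open>primed: weakly decreasing down columns\<close>
     (\<forall>i i' j k k'. (i, j) \<in> diagram lam \<longrightarrow> (i', j) \<in> diagram lam \<longrightarrow> i < i' \<longrightarrow>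
        T (i, j) = Pr k \<longrightarrow> T (i', j) = Pr k' \<longrightarrow> k' \<le> k) \<and>
     \<comment> \<open>primed k' in column j satisfies k \<ge> col_len j - j + 1\<close>
     (\<forall>i j k. (i, j) \<in> diagram lam \<longrightarrow> T (i, j) = Pr k \<longrightarrow>
        int (col_len lam j) - int j + 1 \<le> k)"

definition sym_weight :: "(nat \<Rightarrow> 'r::comm_ring_1) \<Rightarrow> (int \<Rightarrow> 'r) \<Rightarrow> sym \<Rightarrow> 'r" where
  "sym_weight x a s = (case s of Unpr k \<Rightarrow> x k | Pr k \<Rightarrow> - a k)"

end

theory Submission
  imports Defs
begin

definition Sset :: "'a set \<Rightarrow> ('a \<Rightarrow> bool) \<Rightarrow> ('a \<Rightarrow> bool) \<Rightarrow> 'a set set" where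
  "Sset T P Q = {s. s \<subseteq> T \<and> (\<forall>a\<in>T. P a \<longrightarrow> a\<in>s) \<and> (\<forall>a\<in>T. Q a \<longrightarrow> a\<notin>s)}"

lemma Sset_empty: "Sset {} P Q = {{}}" by (auto simp: Sset_def)

lemma Sset_insert:
  assumes "b \<notin> T"
  shows "Sset (insert b T) P Q = (if Q b then {} else insert b ` Sset T P Q) \<union> (if P b then {} else Sset T P Q)"
proof -
  have "s \<in> Sset (insert b T) P Q \<longleftrightarrow> s \<in> (if Q b then {} else insert b ` Sset T P Q) \<union> (if P b then {} else Sset T P Q)" for s
  proof
    assume s: "s \<in> Sset (insert b T) P Q"
    show "s \<in> (if Q b then {} else insert b ` Sset T P Q) \<union> (if P b then {} else Sset T P Q)"
    proof (cases "b \<in> s")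
      case True
      then have "s = insert b (s - {b})" by auto
      moreover have "s - {b} \<in> Sset T P Q" using s assms by (auto simp: Sset_def)
      moreover have "\<not> Q b" using s True by (auto simp: Sset_def)
      ultimately have "s \<in> insert b ` Sset T P Q" by (metis image_eqI)
      then show ?thesis using \<open>\<not> Q b\<close> by simp
    next
      case False
      then have "s \<in> Sset T P Q" "\<not> P b" using s by (auto simp: Sset_def)
      then show ?thesis by auto
    qed
  next
    assume "s \<in> (if Q b then {} else insert b ` Sset T P Q) \<union> (if P b then {} else Sset T P Q)"
    then show "s \<in> Sset (insert b T) P Q" using assms
      by (auto simp: Sset_def split: if_splits)
  qed
  then show ?thesis by blast
qed

lemma subset_sum_prod:
  fixes f g :: "'a \<Rightarrow> 'r::comm_ring_1"
  assumes "finite T"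
  shows "(\<Sum>s\<in>Sset T P Q. \<Prod>a\<in>T. (if a\<in>s then f a else g a))
        = (\<Prod>a\<in>T. (if Q a then 0 else f a) + (if P a then 0 else g a))"
  using assms
proof (induction T rule: finite_induct)
  case empty
  then show ?case by (simp add: Sset_empty)
next
  case (insert b T)
  have fin: "finite (Sset T P Q)" using insert(1) by (auto simp: Sset_def)
  have disj: "insert b ` Sset T P Q \<inter> Sset T P Q = {}"
    using insert(2) by (auto simp: Sset_def)
  have inj: "inj_on (insert b) (Sset T P Q)"
    using insert(2) by (auto simp: Sset_def inj_on_def)
  have p1: "(\<Prod>a\<in>insert b T. (if a\<in>insert b s then f a else g a)) = f b * (\<Prod>a\<in>T. (if a\<in>s then f a else g a))"
    if "s \<in> Sset T P Q" for s
  proof -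
    have "(\<Prod>a\<in>insert b T. (if a\<in>insert b s then f a else g a)) = f b * (\<Prod>a\<in>T. (if a\<in>insert b s then f a else g a))"
      using insert(1,2) by simp
    also have "(\<Prod>a\<in>T. (if a\<in>insert b s then f a else g a)) = (\<Prod>a\<in>T. (if a\<in>s then f a else g a))"
      using insert(2) by (intro prod.cong) auto
    finally show ?thesis .
  qed
  have p0: "(\<Prod>a\<in>insert b T. (if a\<in>s then f a else g a)) = g b * (\<Prod>a\<in>T. (if a\<in>s then f a else g a))"
    if "s \<in> Sset T P Q" for s
    using that insert(1,2) by (auto simp: Sset_def)
  define Z where "Z = (\<Sum>s\<in>Sset T P Q. \<Prod>a\<in>T. (if a\<in>s then f a else g a))"
  have s1: "(\<Sum>s\<in>insert b ` Sset T P Q. \<Prod>a\<in>insert b T. (if a\<in>s then f a else g a)) = f b * Z"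
  proof -
    have "(\<Sum>s\<in>insert b ` Sset T P Q. \<Prod>a\<in>insert b T. (if a\<in>s then f a else g a))
        = (\<Sum>s\<in>Sset T P Q. \<Prod>a\<in>insert b T. (if a\<in>insert b s then f a else g a))"
      using sum.reindex[OF inj] by (simp only: comp_def)
    also have "\<dots> = (\<Sum>s\<in>Sset T P Q. f b * (\<Prod>a\<in>T. (if a\<in>s then f a else g a)))"
      by (rule sum.cong[OF refl p1])
    finally show ?thesis by (simp add: Z_def sum_distrib_left)
  qed
  have s0: "(\<Sum>s\<in>Sset T P Q. \<Prod>a\<in>insert b T. (if a\<in>s then f a else g a)) = g b * Z"
    by (simp add: p0 Z_def sum_distrib_left)
  have "(\<Sum>s\<in>Sset (insert b T) P Q. \<Prod>a\<in>insert b T. (if a\<in>s then f a else g a))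
      = (if Q b then 0 else f b * Z) + (if P b then 0 else g b * Z)"
    unfolding Sset_insert[OF insert(2)]
    using fin disj s1 s0 by (auto simp: sum.union_disjoint)
  also have "\<dots> = ((if Q b then 0 else f b) + (if P b then 0 else g b)) * Z"
    by (auto simp: algebra_simps)
  finally show ?case using insert by (simp add: Z_def)
qed


definition hasR :: "(nat\<times>nat) set \<Rightarrow> nat\<times>nat \<Rightarrow> bool" where
  "hasR T a \<longleftrightarrow> (\<exists>j'. snd a < j' \<and> (fst a, j') \<in> T)"
definition hasL :: "(nat\<times>nat) set \<Rightarrow> nat\<times>nat \<Rightarrow> bool" where
  "hasL T a \<longleftrightarrow> (\<exists>j'. j' < snd a \<and> (fst a, j') \<in> T)"
definition hasU :: "(nat\<times>nat) set \<Rightarrow> nat\<times>nat \<Rightarrow> bool" where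
  "hasU T a \<longleftrightarrow> (\<exists>i'. i' < fst a \<and> (i', snd a) \<in> T)"
definition hasD :: "(nat\<times>nat) set \<Rightarrow> nat\<times>nat \<Rightarrow> bool" where
  "hasD T a \<longleftrightarrow> (\<exists>i'. fst a < i' \<and> (i', snd a) \<in> T)"

definition convex_set :: "(nat\<times>nat) set \<Rightarrow> bool" where
  "convex_set T \<longleftrightarrow>
    (\<forall>i j j' j''. (i,j)\<in>T \<longrightarrow> (i,j'')\<in>T \<longrightarrow> j \<le> j' \<longrightarrow> j' \<le> j'' \<longrightarrow> (i,j')\<in>T) \<and>
    (\<forall>i i' i'' j. (i,j)\<in>T \<longrightarrow> (i'',j)\<in>T \<longrightarrow> i \<le> i' \<longrightarrow> i' \<le> i'' \<longrightarrow> (i',j)\<in>T) \<and>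
    (\<forall>i j. (i+1,j)\<in>T \<longrightarrow> (i+1,j+1)\<in>T \<longrightarrow> (i,j)\<in>T \<longrightarrow> (i,j+1)\<in>T) \<and>
    (\<forall>i j. (i,j)\<in>T \<longrightarrow> (i,j+1)\<in>T \<longrightarrow> (i+1,j+1)\<in>T \<longrightarrow> (i+1,j)\<in>T)"

lemma prod3:
  fixes x y z :: "'r::comm_ring_1"
  assumes "finite S" "R \<subseteq> S" "U \<subseteq> S" "R \<inter> U = {}"
  shows "(\<Prod>a\<in>S. if a\<in>R then x else if a\<in>U then y else z) = x^card R * y^card U * z^card (S - R - U)"
proof -
  have fR: "finite R" using assms(1,2) finite_subset by blast
  have fU: "finite U" using assms(1,3) finite_subset by blast
  have S: "S = R \<union> (U \<union> (S - R - U))" using assms by auto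
  have "(\<Prod>a\<in>S. if a\<in>R then x else if a\<in>U then y else z)
     = (\<Prod>a\<in>R. if a\<in>R then x else if a\<in>U then y else z) *
       ((\<Prod>a\<in>U. if a\<in>R then x else if a\<in>U then y else z) *
        (\<Prod>a\<in>S - R - U. if a\<in>R then x else if a\<in>U then y else z))"
    apply (subst S)
    apply (subst prod.union_disjoint)
    using assms fR fU apply auto[3]
    apply (subst prod.union_disjoint)
    using assms fR fU apply auto
    done
  also have "\<dots> = x^card R * (y^card U * z^card (S - R - U))"
  proof -
    have "(\<Prod>a\<in>U. if a\<in>R then x else if a\<in>U then y else z) = (\<Prod>a\<in>U. y)"
      using assms(4) by (intro prod.cong) auto
    then show ?thesis by (simp add: prod_constant)
  qed
  finally show ?thesis by (simp add: mult.assoc)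
qed

lemma content_right: "content (i, j+1) = content (i,j) + 1"
  by (simp add: content_def)
lemma content_up: "1 \<le> i \<Longrightarrow> content (i-1, j) = content (i,j) + 1"
  by (simp add: content_def of_nat_diff)

locale cvx =
  fixes T :: "(nat\<times>nat) set"
  assumes fin: "finite T" and cvx: "convex_set T"
begin

lemma rowc: "(i,j)\<in>T \<Longrightarrow> (i,j'')\<in>T \<Longrightarrow> j \<le> j' \<Longrightarrow> j' \<le> j'' \<Longrightarrow> (i,j')\<in>T"
  using cvx unfolding convex_set_def by blast
lemma colc: "(i,j)\<in>T \<Longrightarrow> (i'',j)\<in>T \<Longrightarrow> i \<le> i' \<Longrightarrow> i' \<le> i'' \<Longrightarrow> (i',j)\<in>T"
  using cvx unfolding convex_set_def by blast
lemma cl1: "(i+1,j)\<in>T \<Longrightarrow> (i+1,j+1)\<in>T \<Longrightarrow> (i,j)\<in>T \<Longrightarrow> (i,j+1)\<in>T"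
  using cvx unfolding convex_set_def by blast
lemma cl2: "(i,j)\<in>T \<Longrightarrow> (i,j+1)\<in>T \<Longrightarrow> (i+1,j+1)\<in>T \<Longrightarrow> (i+1,j)\<in>T"
  using cvx unfolding convex_set_def by blast

lemma hasR_nb: assumes "(i,j)\<in>T" shows "hasR T (i,j) \<longleftrightarrow> (i,j+1)\<in>T"
proof
  assume "hasR T (i,j)"
  then obtain j' where "j < j'" "(i,j')\<in>T" unfolding hasR_def by auto
  then show "(i,j+1)\<in>T" using rowc[OF assms, of j' "j+1"] by simp
next
  assume "(i,j+1)\<in>T" then show "hasR T (i,j)" unfolding hasR_def by (intro exI[of _ "j+1"]) simp
qed
lemma hasL_nb: assumes "(i,j)\<in>T" shows "hasL T (i,j) \<longleftrightarrow> (1 \<le> j \<and> (i,j-1)\<in>T)"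
proof
  assume "hasL T (i,j)"
  then obtain j' where "j' < j" "(i,j')\<in>T" unfolding hasL_def by auto
  then show "1 \<le> j \<and> (i,j-1)\<in>T" using rowc[OF _ assms, of j' "j-1"] by simp
next
  assume "1 \<le> j \<and> (i,j-1)\<in>T" then show "hasL T (i,j)" unfolding hasL_def by (intro exI[of _ "j-1"]) simp
qed
lemma hasD_nb: assumes "(i,j)\<in>T" shows "hasD T (i,j) \<longleftrightarrow> (i+1,j)\<in>T"
proof
  assume "hasD T (i,j)"
  then obtain i' where "i < i'" "(i',j)\<in>T" unfolding hasD_def by auto
  then show "(i+1,j)\<in>T" using colc[OF assms, of i' "i+1"] by simp
next
  assume "(i+1,j)\<in>T" then show "hasD T (i,j)" unfolding hasD_def by (intro exI[of _ "i+1"]) simp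
qed
lemma hasU_nb: assumes "(i,j)\<in>T" shows "hasU T (i,j) \<longleftrightarrow> (1 \<le> i \<and> (i-1,j)\<in>T)"
proof
  assume "hasU T (i,j)"
  then obtain i' where "i' < i" "(i',j)\<in>T" unfolding hasU_def by auto
  then show "1 \<le> i \<and> (i-1,j)\<in>T" using colc[OF _ assms, of i' "i-1"] by simp
next
  assume "1 \<le> i \<and> (i-1,j)\<in>T" then show "hasU T (i,j)" unfolding hasU_def by (intro exI[of _ "i-1"]) simp
qed

end


definition z1 :: "(nat\<times>nat) set \<Rightarrow> (int \<Rightarrow> 'r::comm_ring_1) \<Rightarrow> 'r \<Rightarrow> int \<Rightarrow> nat\<times>nat \<Rightarrow> 'r" where
  "z1 T w y d a = (if hasU T a then 0 else w (content a)) + (if hasR T a then 0 else (if content a \<ge> d then y else 0))"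
definition z2 :: "(nat\<times>nat) set \<Rightarrow> (int \<Rightarrow> 'r::comm_ring_1) \<Rightarrow> 'r \<Rightarrow> int \<Rightarrow> nat\<times>nat \<Rightarrow> 'r" where
  "z2 T w y d a = (if hasL T a then 0 else (if content a \<ge> d + 1 then y else 0))
      + (if hasD T a then 0 else w (content a) + (if content a = d then y else 0))"

context cvx begin

lemma case1:
  assumes "\<exists>a\<in>T. hasU T a \<and> hasR T a"
  shows "(\<Prod>a\<in>T. z1 T w y d a) = 0 \<and> (\<Prod>a\<in>T. z2 T w y d a) = 0"
proof -
    obtain i j where a: "(i,j)\<in>T" "hasU T (i,j)" "hasR T (i,j)" using assms by auto
    then have i1: "1 \<le> i" and u: "(i-1,j)\<in>T" and r: "(i,j+1)\<in>T"
      using hasU_nb hasR_nb by auto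
    have "(i-1+1, j)\<in>T" "(i-1+1,j+1)\<in>T" using a r i1 by auto
    then have ur: "(i-1,j+1)\<in>T" using cl1 u by blast
    have "hasL T (i-1,j+1)" using hasL_nb[OF ur] u by simp
    moreover have "hasD T (i-1,j+1)" using hasD_nb[OF ur] r i1 by simp
    ultimately have "z2 T w y d (i-1,j+1) = 0" by (simp add: z2_def)
    then have "(\<Prod>a\<in>T. z2 T w y d a) = 0" using ur fin by (intro prod_zero) auto
    moreover have "z1 T w y d (i,j) = 0" using a by (simp add: z1_def)
    then have "(\<Prod>a\<in>T. z1 T w y d a) = 0" using a fin by (intro prod_zero) auto
    ultimately show ?thesis by simp
qed

lemma case2:
  assumes "\<exists>a\<in>T. hasL T a \<and> hasD T a"
  shows "(\<Prod>a\<in>T. z1 T w y d a) = 0 \<and> (\<Prod>a\<in>T. z2 T w y d a) = 0"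
proof -
    obtain i j where a: "(i,j)\<in>T" "hasL T (i,j)" "hasD T (i,j)" using assms by auto
    then have j1: "1 \<le> j" and l: "(i,j-1)\<in>T" and dn: "(i+1,j)\<in>T"
      using hasL_nb hasD_nb by auto
    have "(i, j-1+1)\<in>T" "(i+1,j-1+1)\<in>T" using a dn j1 by auto
    then have dl: "(i+1,j-1)\<in>T" using cl2 l by blast
    have "hasU T (i+1,j-1)" using hasU_nb[OF dl] l by simp
    moreover have "hasR T (i+1,j-1)" using hasR_nb[OF dl] dn j1 by simp
    ultimately have "z1 T w y d (i+1,j-1) = 0" by (simp add: z1_def)
    then have "(\<Prod>a\<in>T. z1 T w y d a) = 0" using dl fin by (intro prod_zero) auto
    moreover have "z2 T w y d (i,j) = 0" using a by (simp add: z2_def)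
    then have "(\<Prod>a\<in>T. z2 T w y d a) = 0" using a fin by (intro prod_zero) auto
    ultimately show ?thesis by simp
qed

lemma case3:
  assumes n1: "\<not>(\<exists>a\<in>T. hasU T a \<and> hasR T a)" and n2: "\<not>(\<exists>a\<in>T. hasL T a \<and> hasD T a)"
    and "\<exists>a\<in>T. hasU T a \<and> content a < d"
  shows "(\<Prod>a\<in>T. z1 T w y d a) = 0 \<and> (\<Prod>a\<in>T. z2 T w y d a) = 0"
proof -
  obtain i j where a: "(i,j)\<in>T" "hasU T (i,j)" "content (i,j) < d" using assms(3) by auto
  then have i1: "1 \<le> i" and u: "(i-1,j)\<in>T" using hasU_nb by auto
  have "\<not> hasR T (i,j)" using n1 a by auto
  then have "z1 T w y d (i,j) = 0" using a by (simp add: z1_def)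
  then have "(\<Prod>a\<in>T. z1 T w y d a) = 0" using a fin by (intro prod_zero) auto
  moreover have "hasD T (i-1,j)" using hasD_nb[OF u] a i1 by simp
  moreover have "\<not> hasL T (i-1,j)" using n2 u calculation(2) by auto
  moreover have "content (i-1,j) < d + 1" using content_up[OF i1, of j] a by simp
  ultimately have "z2 T w y d (i-1,j) = 0" by (simp add: z2_def)
  then have "(\<Prod>a\<in>T. z2 T w y d a) = 0" using u fin by (intro prod_zero) auto
  with \<open>(\<Prod>a\<in>T. z1 T w y d a) = 0\<close> show ?thesis by simp
qed

lemma case4:
  assumes n1: "\<not>(\<exists>a\<in>T. hasU T a \<and> hasR T a)" and n2: "\<not>(\<exists>a\<in>T. hasL T a \<and> hasD T a)"
    and "\<exists>a\<in>T. hasD T a \<and> content a \<le> d"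
  shows "(\<Prod>a\<in>T. z1 T w y d a) = 0 \<and> (\<Prod>a\<in>T. z2 T w y d a) = 0"
proof -
  obtain i j where a: "(i,j)\<in>T" "hasD T (i,j)" "content (i,j) \<le> d" using assms(3) by auto
  then have dn: "(i+1,j)\<in>T" using hasD_nb by auto
  have "\<not> hasL T (i,j)" using n2 a by auto
  then have "z2 T w y d (i,j) = 0" using a by (simp add: z2_def)
  then have "(\<Prod>a\<in>T. z2 T w y d a) = 0" using a fin by (intro prod_zero) auto
  moreover have hu: "hasU T (i+1,j)" using hasU_nb[OF dn] a by simp
  moreover have "\<not> hasR T (i+1,j)" using n1 dn hu by auto
  moreover have "content (i+1,j) < d" using a by (simp add: content_def)
  ultimately have "z1 T w y d (i+1,j) = 0" by (simp add: z1_def)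
  then have "(\<Prod>a\<in>T. z1 T w y d a) = 0" using dn fin by (intro prod_zero) auto
  with \<open>(\<Prod>a\<in>T. z2 T w y d a) = 0\<close> show ?thesis by simp
qed

lemma case5:
  fixes w :: "int \<Rightarrow> 'r::comm_ring_1"
  assumes wx: "\<And>c. c \<ge> d \<Longrightarrow> w c = x"
  and c5: "\<forall>a\<in>T. \<not>(hasU T a \<and> hasR T a) \<and> \<not>(hasL T a \<and> hasD T a) \<and>
            \<not>(hasU T a \<and> content a < d) \<and> \<not>(hasD T a \<and> content a \<le> d)"
  shows "(\<Prod>a\<in>T. z1 T w y d a) = (\<Prod>a\<in>T. z2 T w y d a)"
proof -
  define Tl where "Tl = {a\<in>T. content a < d}"
  define Tg where "Tg = {a\<in>T. content a \<ge> d}"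
  have TT: "T = Tl \<union> Tg" "Tl \<inter> Tg = {}" by (auto simp: Tl_def Tg_def)
  have fTl: "finite Tl" and fTg: "finite Tg" using fin by (auto simp: Tl_def Tg_def)
  have split: "(\<Prod>a\<in>T. f a) = (\<Prod>a\<in>Tl. f a) * (\<Prod>a\<in>Tg. f a)" for f :: "nat\<times>nat \<Rightarrow> 'r"
    by (subst TT(1), rule prod.union_disjoint[OF fTl fTg TT(2)])
  have l: "(\<Prod>a\<in>Tl. z1 T w y d a) = (\<Prod>a\<in>Tl. z2 T w y d a)"
  proof (rule prod.cong[OF refl])
    fix a assume a: "a \<in> Tl"
    then have "a \<in> T" "content a < d" by (auto simp: Tl_def)
    then have "\<not> hasU T a" "\<not> hasD T a" using c5 by auto
    then show "z1 T w y d a = z2 T w y d a" using \<open>content a < d\<close>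
      by (simp add: z1_def z2_def)
  qed
  define R where "R = {a\<in>Tg. hasR T a}"
  define U where "U = {a\<in>Tg. hasU T a}"
  define L where "L = {a\<in>Tg. content a \<ge> d + 1 \<and> hasL T a}"
  define Dn where "Dn = {a\<in>Tg. content a \<ge> d + 1 \<and> hasD T a}"
  have g1: "(\<Prod>a\<in>Tg. z1 T w y d a) = (\<Prod>a\<in>Tg. if a\<in>R then x else if a\<in>U then y else x + y)"
  proof (rule prod.cong[OF refl])
    fix a assume a: "a \<in> Tg"
    then have aT: "a \<in> T" and ca: "content a \<ge> d" by (auto simp: Tg_def)
    then have "\<not>(hasU T a \<and> hasR T a)" using c5 by auto
    then show "z1 T w y d a = (if a\<in>R then x else if a\<in>U then y else x + y)"
      using a ca wx[OF ca] by (auto simp: z1_def R_def U_def)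
  qed
  have g2: "(\<Prod>a\<in>Tg. z2 T w y d a) = (\<Prod>a\<in>Tg. if a\<in>L then x else if a\<in>Dn then y else x + y)"
  proof (rule prod.cong[OF refl])
    fix a assume a: "a \<in> Tg"
    then have aT: "a \<in> T" and ca: "content a \<ge> d" by (auto simp: Tg_def)
    then have "\<not>(hasL T a \<and> hasD T a)" "content a = d \<longrightarrow> \<not> hasD T a" using c5 by auto
    then show "z2 T w y d a = (if a\<in>L then x else if a\<in>Dn then y else x + y)"
      using a ca wx[OF ca] by (auto simp: z2_def L_def Dn_def algebra_simps)
  qed
  have RU: "R \<subseteq> Tg" "U \<subseteq> Tg" "R \<inter> U = {}" using c5 by (auto simp: R_def U_def Tg_def)
  have LD: "L \<subseteq> Tg" "Dn \<subseteq> Tg" "L \<inter> Dn = {}" using c5 by (auto simp: L_def Dn_def Tg_def)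
  have cRL: "card L = card R"
  proof -
    have "L = (\<lambda>(i,j). (i,j+1)) ` R"
    proof
      show "(\<lambda>(i,j). (i,j+1)) ` R \<subseteq> L"
      proof
        fix b assume "b \<in> (\<lambda>(i,j). (i,j+1)) ` R"
        then obtain i j where ij: "(i,j)\<in>R" "b = (i,j+1)" by auto
        then have t: "(i,j)\<in>T" "content (i,j) \<ge> d" "hasR T (i,j)" by (auto simp: R_def Tg_def)
        then have t2: "(i,j+1)\<in>T" using hasR_nb by auto
        have "hasL T (i,j+1)" using hasL_nb[OF t2] t by simp
        then show "b \<in> L" using ij t t2 content_right[of i j] by (auto simp: L_def Tg_def)
      qed
    next
      show "L \<subseteq> (\<lambda>(i,j). (i,j+1)) ` R"
      proof
        fix b assume b: "b \<in> L"
        obtain i j where bij: "b = (i,j)" by (cases b)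
        then have t: "(i,j)\<in>T" "content (i,j) \<ge> d + 1" "hasL T (i,j)" using b by (auto simp: L_def Tg_def)
        then have j1: "1 \<le> j" and t2: "(i,j-1)\<in>T" using hasL_nb by auto
        have "hasR T (i,j-1)" using hasR_nb[OF t2] t j1 by simp
        moreover have "content (i,j-1) \<ge> d" using t j1 by (simp add: content_def of_nat_diff)
        ultimately have "(i,j-1)\<in>R" using t2 by (auto simp: R_def Tg_def)
        then show "b \<in> (\<lambda>(i,j). (i,j+1)) ` R" using bij j1 by (auto intro!: image_eqI[of _ _ "(i,j-1)"])
      qed
    qed
    moreover have "inj_on (\<lambda>(i,j). (i,j+1)) R" by (auto simp: inj_on_def)
    ultimately show ?thesis by (simp add: card_image)
  qed
  have cUD: "card Dn = card U"
  proof -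
    have "Dn = (\<lambda>(i,j). (i-1,j)) ` U"
    proof
      show "(\<lambda>(i,j). (i-1,j)) ` U \<subseteq> Dn"
      proof
        fix b assume "b \<in> (\<lambda>(i,j). (i-1,j)) ` U"
        then obtain i j where ij: "(i,j)\<in>U" "b = (i-1,j)" by auto
        then have t: "(i,j)\<in>T" "content (i,j) \<ge> d" "hasU T (i,j)" by (auto simp: U_def Tg_def)
        then have i1: "1 \<le> i" and t2: "(i-1,j)\<in>T" using hasU_nb by auto
        have "hasD T (i-1,j)" using hasD_nb[OF t2] t i1 by simp
        then show "b \<in> Dn" using ij t t2 content_up[OF i1, of j] by (auto simp: Dn_def Tg_def)
      qed
    next
      show "Dn \<subseteq> (\<lambda>(i,j). (i-1,j)) ` U"
      proof
        fix b assume b: "b \<in> Dn"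
        obtain i j where bij: "b = (i,j)" by (cases b)
        then have t: "(i,j)\<in>T" "content (i,j) \<ge> d + 1" "hasD T (i,j)" using b by (auto simp: Dn_def Tg_def)
        then have t2: "(i+1,j)\<in>T" using hasD_nb by auto
        have "hasU T (i+1,j)" using hasU_nb[OF t2] t by simp
        moreover have "content (i+1,j) \<ge> d" using t by (simp add: content_def)
        ultimately have "(i+1,j)\<in>U" using t2 by (auto simp: U_def Tg_def)
        then show "b \<in> (\<lambda>(i,j). (i-1,j)) ` U" using bij by (auto intro!: image_eqI[of _ _ "(i+1,j)"])
      qed
    qed
    moreover have "inj_on (\<lambda>(i,j). (i-1,j)) U"
    proof -
      have "\<forall>a\<in>U. 1 \<le> fst a" using hasU_nb by (auto simp: U_def Tg_def)
      then show ?thesis unfolding inj_on_def by (metis (no_types, lifting) case_prod_conv diff_Suc_1 fst_conv le_add_diff_inverse2 One_nat_def prod.collapse prod.inject)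
    qed
    ultimately show ?thesis by (simp add: card_image)
  qed
  have fR: "finite R" "finite U" "finite L" "finite Dn" using fTg RU LD finite_subset by blast+
  have c1: "card (Tg - R - U) = card Tg - card R - card U"
  proof -
    have "Tg - R - U = Tg - (R \<union> U)" by auto
    moreover have "card (R \<union> U) = card R + card U" using card_Un_disjoint[OF fR(1,2) RU(3)] .
    moreover have "card (Tg - (R \<union> U)) = card Tg - card (R \<union> U)"
      using RU fTg by (intro card_Diff_subset) (auto intro: finite_subset)
    ultimately show ?thesis by simp
  qed
  have c2: "card (Tg - L - Dn) = card Tg - card L - card Dn"
  proof -
    have "Tg - L - Dn = Tg - (L \<union> Dn)" by auto
    moreover have "card (L \<union> Dn) = card L + card Dn" using card_Un_disjoint[OF fR(3,4) LD(3)] .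
    moreover have "card (Tg - (L \<union> Dn)) = card Tg - card (L \<union> Dn)"
      using LD fTg by (intro card_Diff_subset) (auto intro: finite_subset)
    ultimately show ?thesis by simp
  qed
  have "(\<Prod>a\<in>Tg. z1 T w y d a) = (\<Prod>a\<in>Tg. z2 T w y d a)"
    unfolding g1 g2 prod3[OF fTg RU] prod3[OF fTg LD] c1 c2 cRL cUD ..
  then show ?thesis using l by (simp add: split)
qed

lemma core:
  fixes w :: "int \<Rightarrow> 'r::comm_ring_1"
  assumes wx: "\<And>c. c \<ge> d \<Longrightarrow> w c = x"
  shows "(\<Prod>a\<in>T. z1 T w y d a) = (\<Prod>a\<in>T. z2 T w y d a)"
proof (cases "\<exists>a\<in>T. hasU T a \<and> hasR T a")
  case True then show ?thesis using case1 by metis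
next
  case n1: False
  show ?thesis
  proof (cases "\<exists>a\<in>T. hasL T a \<and> hasD T a")
    case True then show ?thesis using case2 by metis
  next
    case n2: False
    show ?thesis
    proof (cases "\<exists>a\<in>T. hasU T a \<and> content a < d")
      case True then show ?thesis using case3[OF n1 n2] by metis
    next
      case n3: False
      show ?thesis
      proof (cases "\<exists>a\<in>T. hasD T a \<and> content a \<le> d")
        case True then show ?thesis using case4[OF n1 n2] by metis
      next
        case n4: False
        show ?thesis using n1 n2 n3 n4 by (intro case5[OF wx]) auto
      qed
    qed
  qed
qed

end

type_synonym 'r letter = "bool \<times> (int \<Rightarrow> 'r)"

definition rowok :: "'r letter list \<Rightarrow> nat \<Rightarrow> nat \<Rightarrow> bool" where
  "rowok Ls u v \<longleftrightarrow> u \<le> v \<and> (u = v \<longrightarrow> fst (Ls ! u))"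
definition colok :: "'r letter list \<Rightarrow> nat \<Rightarrow> nat \<Rightarrow> bool" where
  "colok Ls u v \<longleftrightarrow> u \<le> v \<and> (u = v \<longrightarrow> \<not> fst (Ls ! u))"

definition validF :: "'r letter list \<Rightarrow> nat list \<Rightarrow> (nat \<times> nat \<Rightarrow> nat) \<Rightarrow> bool" where
  "validF Ls lam F \<longleftrightarrow> (\<forall>a. a \<notin> diagram lam \<longrightarrow> F a = 0) \<and> (\<forall>a\<in>diagram lam. F a < length Ls) \<and>
     (\<forall>i j j'. (i,j)\<in>diagram lam \<longrightarrow> (i,j')\<in>diagram lam \<longrightarrow> j < j' \<longrightarrow> rowok Ls (F (i,j)) (F (i,j'))) \<and>
     (\<forall>i i' j. (i,j)\<in>diagram lam \<longrightarrow> (i',j)\<in>diagram lam \<longrightarrow> i < i' \<longrightarrow> colok Ls (F (i,j)) (F (i',j)))"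

definition SF :: "('r::comm_ring_1) letter list \<Rightarrow> nat list \<Rightarrow> 'r" where
  "SF Ls lam = (\<Sum>F\<in>{F. validF Ls lam F}. \<Prod>a\<in>diagram lam. snd (Ls ! F a) (content a))"

lemma finite_diagram: "finite (diagram lam)"
proof -
  have "diagram lam \<subseteq> {1..length lam} \<times> {1..Max (set lam)}"
  proof
    fix a assume "a \<in> diagram lam"
    then obtain i j where a: "a = (i,j)" "1 \<le> i" "i \<le> length lam" "1 \<le> j" "j \<le> lam ! (i-1)"
      by (auto simp: diagram_def)
    then have "lam ! (i-1) \<in> set lam" by simp
    then have "lam ! (i-1) \<le> Max (set lam)" by simp
    then have "j \<le> Max (set lam)" using a by linarith
    then show "a \<in> {1..length lam} \<times> {1..Max (set lam)}" using a by auto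
  qed
  then show ?thesis using finite_subset by blast
qed

lemma finite_funs_bounded:
  assumes "finite D"
  shows "finite {F :: 'a \<Rightarrow> nat. (\<forall>a. a \<notin> D \<longrightarrow> F a = 0) \<and> (\<forall>a\<in>D. F a < N)}"
proof -
  have "{F :: 'a \<Rightarrow> nat. (\<forall>a. a \<notin> D \<longrightarrow> F a = 0) \<and> (\<forall>a\<in>D. F a < N)}
        \<subseteq> {f. \<forall>x. (x \<in> D \<longrightarrow> f x \<in> {0..<N}) \<and> (x \<notin> D \<longrightarrow> f x = 0)}"
    by auto
  moreover have "finite {f :: 'a \<Rightarrow> nat. \<forall>x. (x \<in> D \<longrightarrow> f x \<in> {0..<N}) \<and> (x \<notin> D \<longrightarrow> f x = 0)}"
    using finite_set_of_finite_funs[of D "{0..<N}" 0] assms by simp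
  ultimately show ?thesis using finite_subset by blast
qed

lemma finite_validF: "finite {F. validF Ls lam F}"
proof -
  have "{F. validF Ls lam F} \<subseteq> {F. (\<forall>a. a \<notin> diagram lam \<longrightarrow> F a = 0) \<and> (\<forall>a\<in>diagram lam. F a < length Ls)}"
    by (auto simp: validF_def)
  then show ?thesis using finite_funs_bounded[OF finite_diagram] finite_subset by blast
qed


lemma diag_mem: "(i,j) \<in> diagram lam \<longleftrightarrow> 1 \<le> i \<and> i \<le> length lam \<and> 1 \<le> j \<and> j \<le> lam ! (i-1)"
  by (simp add: diagram_def)

lemma diag_left: "(i,j') \<in> diagram lam \<Longrightarrow> 1 \<le> j \<Longrightarrow> j \<le> j' \<Longrightarrow> (i,j) \<in> diagram lam"
  by (simp add: diagram_def)

lemma diag_up: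
  assumes "is_partition lam" "(i',j) \<in> diagram lam" "1 \<le> i" "i \<le> i'"
  shows "(i,j) \<in> diagram lam"
proof (cases "i = i'")
  case True then show ?thesis using assms by simp
next
  case False
  have s: "sorted_wrt (\<ge>) lam" using assms(1) by (simp add: is_partition_def)
  have lt: "i - 1 < i' - 1" "i' - 1 < length lam" using assms False by (auto simp: diagram_def)
  have "lam ! (i'-1) \<le> lam ! (i-1)"
    using sorted_wrt_nth_less[OF s lt] by simp
  then show ?thesis using assms by (simp add: diagram_def)
qed

definition mergeF :: "nat \<Rightarrow> (nat\<times>nat \<Rightarrow> nat) \<Rightarrow> nat\<times>nat \<Rightarrow> nat" where
  "mergeF p F = (\<lambda>a. if F a \<le> p then F a else F a - 1)"
definition fillF :: "(nat\<times>nat) set \<Rightarrow> nat \<Rightarrow> (nat\<times>nat \<Rightarrow> nat) \<Rightarrow> (nat\<times>nat) set \<Rightarrow> nat\<times>nat \<Rightarrow> nat" where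
  "fillF D p G s = (\<lambda>a. if a \<notin> D then 0 else if G a < p then G a else if G a = p then (if a \<in> s then p else Suc p) else Suc (G a))"
definition liftG :: "nat \<Rightarrow> (nat\<times>nat \<Rightarrow> nat) \<Rightarrow> nat\<times>nat \<Rightarrow> nat" where
  "liftG p G a = (if G a \<le> p then G a else Suc (G a))"
definition thetaG :: "(nat\<times>nat) set \<Rightarrow> nat \<Rightarrow> (nat\<times>nat \<Rightarrow> nat) \<Rightarrow> (nat\<times>nat) set" where
  "thetaG D p G = {a\<in>D. G a = p}"
definition Gset :: "(nat\<times>nat) set \<Rightarrow> nat \<Rightarrow> (nat\<times>nat \<Rightarrow> nat) set" where
  "Gset D N = {G. (\<forall>a. a \<notin> D \<longrightarrow> G a = 0) \<and> (\<forall>a\<in>D. G a < N)}"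
definition coarse :: "'r letter list \<Rightarrow> nat list \<Rightarrow> nat \<Rightarrow> (nat\<times>nat \<Rightarrow> nat) \<Rightarrow> bool" where
  "coarse Ls lam p G \<longleftrightarrow>
     (\<forall>i j j'. (i,j)\<in>diagram lam \<longrightarrow> (i,j')\<in>diagram lam \<longrightarrow> j < j' \<longrightarrow> \<not>(G (i,j) = p \<and> G (i,j') = p) \<longrightarrow>
        rowok Ls (liftG p G (i,j)) (liftG p G (i,j'))) \<and>
     (\<forall>i i' j. (i,j)\<in>diagram lam \<longrightarrow> (i',j)\<in>diagram lam \<longrightarrow> i < i' \<longrightarrow> \<not>(G (i,j) = p \<and> G (i',j) = p) \<longrightarrow>
        colok Ls (liftG p G (i,j)) (liftG p G (i',j)))"

lemma fill_lift_rowok: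
  assumes "a \<in> D" "b \<in> D" "\<not> (G a = p \<and> G b = p)"
  shows "rowok Ls (fillF D p G s a) (fillF D p G s b) \<longleftrightarrow> rowok Ls (liftG p G a) (liftG p G b)"
  using assms unfolding rowok_def fillF_def liftG_def
  by (cases "G a < p"; cases "G a = p"; cases "G b < p"; cases "G b = p"; auto)

lemma fill_lift_colok:
  assumes "a \<in> D" "b \<in> D" "\<not> (G a = p \<and> G b = p)"
  shows "colok Ls (fillF D p G s a) (fillF D p G s b) \<longleftrightarrow> colok Ls (liftG p G a) (liftG p G b)"
  using assms unfolding colok_def fillF_def liftG_def
  by (cases "G a < p"; cases "G a = p"; cases "G b < p"; cases "G b = p"; auto)

lemma fill_valid:
  assumes G: "G \<in> Gset (diagram lam) (length Ls - 1)" and p: "Suc p < length Ls"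
  shows "validF Ls lam (fillF (diagram lam) p G s) \<longleftrightarrow> coarse Ls lam p G \<and>
    (\<forall>i j j'. (i,j)\<in>thetaG (diagram lam) p G \<longrightarrow> (i,j')\<in>thetaG (diagram lam) p G \<longrightarrow> j < j' \<longrightarrow>
        rowok Ls (fillF (diagram lam) p G s (i,j)) (fillF (diagram lam) p G s (i,j'))) \<and>
    (\<forall>i i' j. (i,j)\<in>thetaG (diagram lam) p G \<longrightarrow> (i',j)\<in>thetaG (diagram lam) p G \<longrightarrow> i < i' \<longrightarrow>
        colok Ls (fillF (diagram lam) p G s (i,j)) (fillF (diagram lam) p G s (i',j)))"
    (is "?L \<longleftrightarrow> ?R")
proof -
  let ?D = "diagram lam"
  let ?F = "fillF ?D p G s"
  have z: "\<forall>a. a \<notin> ?D \<longrightarrow> ?F a = 0" by (simp add: fillF_def)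
  have r: "\<forall>a\<in>?D. ?F a < length Ls" using G p by (auto simp: fillF_def Gset_def)
  show ?thesis
  proof
    assume L: ?L
    show ?R
    proof (intro conjI)
      show "coarse Ls lam p G" unfolding coarse_def
      proof (intro conjI allI impI)
        fix i j j' assume h: "(i,j)\<in>?D" "(i,j')\<in>?D" "j < j'" "\<not>(G (i,j) = p \<and> G (i,j') = p)"
        then have "rowok Ls (?F (i,j)) (?F (i,j'))" using L by (auto simp: validF_def)
        then show "rowok Ls (liftG p G (i,j)) (liftG p G (i,j'))" using fill_lift_rowok[OF h(1,2,4), where Ls=Ls and s=s] by simp
      next
        fix i i' j assume h: "(i,j)\<in>?D" "(i',j)\<in>?D" "i < i'" "\<not>(G (i,j) = p \<and> G (i',j) = p)"
        then have "colok Ls (?F (i,j)) (?F (i',j))" using L by (auto simp: validF_def)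
        then show "colok Ls (liftG p G (i,j)) (liftG p G (i',j))" using fill_lift_colok[OF h(1,2,4), where Ls=Ls and s=s] by simp
      qed
    qed (use L in \<open>auto simp: validF_def thetaG_def\<close>)
  next
    assume R: ?R
    show ?L unfolding validF_def
    proof (intro conjI allI impI ballI)
      fix i j j' assume h: "(i,j)\<in>?D" "(i,j')\<in>?D" "j < j'"
      show "rowok Ls (?F (i,j)) (?F (i,j'))"
      proof (cases "G (i,j) = p \<and> G (i,j') = p")
        case True then show ?thesis using R h by (auto simp: thetaG_def)
      next
        case False then show ?thesis using fill_lift_rowok[OF h(1,2) False, where Ls=Ls and s=s] R h by (auto simp: coarse_def)
      qed
    next
      fix i i' j assume h: "(i,j)\<in>?D" "(i',j)\<in>?D" "i < i'"
      show "colok Ls (?F (i,j)) (?F (i',j))"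
      proof (cases "G (i,j) = p \<and> G (i',j) = p")
        case True then show ?thesis using R h by (auto simp: thetaG_def)
      next
        case False then show ?thesis using fill_lift_colok[OF h(1,2) False, where Ls=Ls and s=s] R h by (auto simp: coarse_def)
      qed
    qed (use z r in auto)
  qed
qed


lemma merge_fill:
  assumes "G \<in> Gset D N" "s \<subseteq> thetaG D p G"
  shows "mergeF p (fillF D p G s) = G"
proof
  fix a
  have z: "a \<notin> D \<Longrightarrow> G a = 0" using assms(1) unfolding Gset_def by blast
  show "mergeF p (fillF D p G s) a = G a"
    using assms z by (cases "a \<in> D") (auto simp: mergeF_def fillF_def thetaG_def)
qed

lemma fill_merge:
  assumes "validF Ls lam F" "mergeF p F = G"
  shows "F = fillF (diagram lam) p G {a\<in>diagram lam. F a = p}"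
proof
  fix a show "F a = fillF (diagram lam) p G {a\<in>diagram lam. F a = p} a"
  proof (cases "a \<in> diagram lam")
    case False
    have "F a = 0" using assms(1) False unfolding validF_def by blast
    then show ?thesis using False by (simp add: fillF_def)
  next
    case True
    have Ga: "G a = (if F a \<le> p then F a else F a - 1)" using assms(2) by (auto simp: mergeF_def)
    show ?thesis using True Ga by (auto simp: fillF_def)
  qed
qed

lemma fill_inj: "inj_on (fillF D p G) (Pow (thetaG D p G))"
proof (rule inj_onI)
  fix s s' assume s: "s \<in> Pow (thetaG D p G)" "s' \<in> Pow (thetaG D p G)" and eq: "fillF D p G s = fillF D p G s'"
  show "s = s'"
  proof (rule set_eqI)
    fix a
    show "a \<in> s \<longleftrightarrow> a \<in> s'"
    proof (cases "a \<in> thetaG D p G")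
      case True
      have "fillF D p G s a = fillF D p G s' a" using eq by simp
      then show ?thesis using True by (auto simp: fillF_def thetaG_def split: if_splits)
    next
      case False then show ?thesis using s by auto
    qed
  qed
qed

lemma fiber_eq:
  assumes "G \<in> Gset (diagram lam) N"
  shows "{F. validF Ls lam F \<and> mergeF p F = G} =
         fillF (diagram lam) p G ` {s. s \<subseteq> thetaG (diagram lam) p G \<and> validF Ls lam (fillF (diagram lam) p G s)}"
proof
  show "{F. validF Ls lam F \<and> mergeF p F = G} \<subseteq> fillF (diagram lam) p G ` {s. s \<subseteq> thetaG (diagram lam) p G \<and> validF Ls lam (fillF (diagram lam) p G s)}"
  proof
    fix F assume F: "F \<in> {F. validF Ls lam F \<and> mergeF p F = G}"
    let ?s = "{a\<in>diagram lam. F a = p}"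
    have e: "F = fillF (diagram lam) p G ?s" using F fill_merge by blast
    have "?s \<subseteq> thetaG (diagram lam) p G" using F by (auto simp: thetaG_def mergeF_def)
    then show "F \<in> fillF (diagram lam) p G ` {s. s \<subseteq> thetaG (diagram lam) p G \<and> validF Ls lam (fillF (diagram lam) p G s)}"
      using F e by (intro image_eqI[of _ _ ?s]) auto
  qed
next
  show "fillF (diagram lam) p G ` {s. s \<subseteq> thetaG (diagram lam) p G \<and> validF Ls lam (fillF (diagram lam) p G s)} \<subseteq> {F. validF Ls lam F \<and> mergeF p F = G}"
    using merge_fill[OF assms] by auto
qed

lemma weight_split:
  assumes "s \<subseteq> thetaG (diagram lam) p G"
  shows "(\<Prod>a\<in>diagram lam. snd (Ls ! fillF (diagram lam) p G s a) (content a)) =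
    (\<Prod>a\<in>diagram lam - thetaG (diagram lam) p G. snd (Ls ! liftG p G a) (content a)) *
    (\<Prod>a\<in>thetaG (diagram lam) p G. if a \<in> s then snd (Ls ! p) (content a) else snd (Ls ! Suc p) (content a))"
proof -
  let ?D = "diagram lam" let ?T = "thetaG (diagram lam) p G"
  have "(\<Prod>a\<in>?D. snd (Ls ! fillF ?D p G s a) (content a)) =
    (\<Prod>a\<in>?D - ?T. snd (Ls ! fillF ?D p G s a) (content a)) * (\<Prod>a\<in>?T. snd (Ls ! fillF ?D p G s a) (content a))"
    by (rule prod.subset_diff) (auto simp: thetaG_def finite_diagram)
  also have "(\<Prod>a\<in>?D - ?T. snd (Ls ! fillF ?D p G s a) (content a)) = (\<Prod>a\<in>?D - ?T. snd (Ls ! liftG p G a) (content a))"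
    by (rule prod.cong) (auto simp: fillF_def liftG_def thetaG_def)
  also have "(\<Prod>a\<in>?T. snd (Ls ! fillF ?D p G s a) (content a)) =
     (\<Prod>a\<in>?T. if a \<in> s then snd (Ls ! p) (content a) else snd (Ls ! Suc p) (content a))"
    by (rule prod.cong) (auto simp: fillF_def thetaG_def)
  finally show ?thesis .
qed

lemma inner1:
  assumes "fst (Ls ! p)" "\<not> fst (Ls ! Suc p)" "a \<in> thetaG D p G" "b \<in> thetaG D p G"
  shows "rowok Ls (fillF D p G s a) (fillF D p G s b) \<longleftrightarrow> a \<in> s"
    and "colok Ls (fillF D p G s a) (fillF D p G s b) \<longleftrightarrow> b \<notin> s"
  using assms by (auto simp: rowok_def colok_def fillF_def thetaG_def)

lemma inner2:
  assumes "\<not> fst (Ls ! p)" "fst (Ls ! Suc p)" "a \<in> thetaG D p G" "b \<in> thetaG D p G"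
  shows "rowok Ls (fillF D p G s a) (fillF D p G s b) \<longleftrightarrow> b \<notin> s"
    and "colok Ls (fillF D p G s a) (fillF D p G s b) \<longleftrightarrow> a \<in> s"
  using assms by (auto simp: rowok_def colok_def fillF_def thetaG_def)

lemma sset1:
  assumes G: "G \<in> Gset (diagram lam) (length Ls - 1)" and p: "Suc p < length Ls"
    and t: "fst (Ls ! p)" "\<not> fst (Ls ! Suc p)"
  shows "{s. s \<subseteq> thetaG (diagram lam) p G \<and> validF Ls lam (fillF (diagram lam) p G s)} =
    (if coarse Ls lam p G then Sset (thetaG (diagram lam) p G) (hasR (thetaG (diagram lam) p G)) (hasU (thetaG (diagram lam) p G)) else {})"
proof -
  let ?T = "thetaG (diagram lam) p G"
  have "s \<subseteq> ?T \<and> validF Ls lam (fillF (diagram lam) p G s) \<longleftrightarrow>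
     coarse Ls lam p G \<and> s \<in> Sset ?T (hasR ?T) (hasU ?T)" for s
  proof -
    have rw: "(\<forall>i j j'. (i,j)\<in>?T \<longrightarrow> (i,j')\<in>?T \<longrightarrow> j < j' \<longrightarrow>
        rowok Ls (fillF (diagram lam) p G s (i,j)) (fillF (diagram lam) p G s (i,j'))) \<longleftrightarrow>
        (\<forall>a\<in>?T. hasR ?T a \<longrightarrow> a \<in> s)"
      using inner1(1)[OF t, where D="diagram lam" and G=G and s=s] by (auto simp: hasR_def)
    have cl: "(\<forall>i i' j. (i,j)\<in>?T \<longrightarrow> (i',j)\<in>?T \<longrightarrow> i < i' \<longrightarrow>
        colok Ls (fillF (diagram lam) p G s (i,j)) (fillF (diagram lam) p G s (i',j))) \<longleftrightarrow>
        (\<forall>a\<in>?T. hasU ?T a \<longrightarrow> a \<notin> s)"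
      using inner1(2)[OF t, where D="diagram lam" and G=G and s=s] by (auto simp: hasU_def)
    show ?thesis using fill_valid[OF G p, of s] rw cl by (auto simp: Sset_def)
  qed
  then show ?thesis by auto
qed

lemma sset2:
  assumes G: "G \<in> Gset (diagram lam) (length Ls - 1)" and p: "Suc p < length Ls"
    and t: "\<not> fst (Ls ! p)" "fst (Ls ! Suc p)"
  shows "{s. s \<subseteq> thetaG (diagram lam) p G \<and> validF Ls lam (fillF (diagram lam) p G s)} =
    (if coarse Ls lam p G then Sset (thetaG (diagram lam) p G) (hasD (thetaG (diagram lam) p G)) (hasL (thetaG (diagram lam) p G)) else {})"
proof -
  let ?T = "thetaG (diagram lam) p G"
  have "s \<subseteq> ?T \<and> validF Ls lam (fillF (diagram lam) p G s) \<longleftrightarrow>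
     coarse Ls lam p G \<and> s \<in> Sset ?T (hasD ?T) (hasL ?T)" for s
  proof -
    have rw: "(\<forall>i j j'. (i,j)\<in>?T \<longrightarrow> (i,j')\<in>?T \<longrightarrow> j < j' \<longrightarrow>
        rowok Ls (fillF (diagram lam) p G s (i,j)) (fillF (diagram lam) p G s (i,j'))) \<longleftrightarrow>
        (\<forall>a\<in>?T. hasL ?T a \<longrightarrow> a \<notin> s)"
      using inner2(1)[OF t, where D="diagram lam" and G=G and s=s] by (auto simp: hasL_def)
    have cl: "(\<forall>i i' j. (i,j)\<in>?T \<longrightarrow> (i',j)\<in>?T \<longrightarrow> i < i' \<longrightarrow>
        colok Ls (fillF (diagram lam) p G s (i,j)) (fillF (diagram lam) p G s (i',j))) \<longleftrightarrow>
        (\<forall>a\<in>?T. hasD ?T a \<longrightarrow> a \<in> s)"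
      using inner2(2)[OF t, where D="diagram lam" and G=G and s=s] by (auto simp: hasD_def)
    show ?thesis using fill_valid[OF G p, of s] rw cl by (auto simp: Sset_def)
  qed
  then show ?thesis by auto
qed


lemma coarse_row_le:
  "coarse Ls lam p G \<Longrightarrow> (i,j)\<in>diagram lam \<Longrightarrow> (i,j')\<in>diagram lam \<Longrightarrow> j < j' \<Longrightarrow> \<not>(G (i,j) = p \<and> G (i,j') = p)
   \<Longrightarrow> liftG p G (i,j) \<le> liftG p G (i,j')"
  unfolding coarse_def rowok_def by blast
lemma coarse_col_le:
  "coarse Ls lam p G \<Longrightarrow> (i,j)\<in>diagram lam \<Longrightarrow> (i',j)\<in>diagram lam \<Longrightarrow> i < i' \<Longrightarrow> \<not>(G (i,j) = p \<and> G (i',j) = p)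
   \<Longrightarrow> liftG p G (i,j) \<le> liftG p G (i',j)"
  unfolding coarse_def colok_def by blast
lemma lift_p: "liftG p G a = p \<longleftrightarrow> G a = p"
  by (auto simp: liftG_def)

lemma coarse_convex:
  assumes part: "is_partition lam" and co: "coarse Ls lam p G"
  shows "convex_set (thetaG (diagram lam) p G)"
proof -
  let ?D = "diagram lam" let ?T = "thetaG (diagram lam) p G"
  have inT: "a \<in> ?T \<longleftrightarrow> a \<in> ?D \<and> G a = p" for a by (simp add: thetaG_def)
  have r: "(i,j')\<in>?T" if h: "(i,j)\<in>?T" "(i,j'')\<in>?T" "j \<le> j'" "j' \<le> j''" for i j j' j''
  proof -
    have D: "(i,j')\<in>?D" using h diag_left[of i j'' lam j'] by (auto simp: thetaG_def diag_mem)
    show ?thesis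
    proof (rule ccontr)
      assume n: "(i,j')\<notin>?T"
      then have ne: "G (i,j') \<noteq> p" using D by (simp add: thetaG_def)
      have "j < j'" using h n le_neq_implies_less by (metis)
      moreover have "j' < j''" using h n le_neq_implies_less by (metis)
      ultimately have "liftG p G (i,j) \<le> liftG p G (i,j')" "liftG p G (i,j') \<le> liftG p G (i,j'')"
        using coarse_row_le[OF co] h D ne by (auto simp: thetaG_def)
      then have "liftG p G (i,j') = p" using h by (auto simp: thetaG_def liftG_def)
      then show False using ne lift_p by metis
    qed
  qed
  have c: "(i',j)\<in>?T" if h: "(i,j)\<in>?T" "(i'',j)\<in>?T" "i \<le> i'" "i' \<le> i''" for i i' i'' j
  proof -
    have D: "(i',j)\<in>?D" using h diag_up[OF part, of i'' j i'] by (auto simp: thetaG_def diag_mem)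
    show ?thesis
    proof (rule ccontr)
      assume n: "(i',j)\<notin>?T"
      then have ne: "G (i',j) \<noteq> p" using D by (simp add: thetaG_def)
      have "i < i'" using h n le_neq_implies_less by (metis)
      moreover have "i' < i''" using h n le_neq_implies_less by (metis)
      ultimately have "liftG p G (i,j) \<le> liftG p G (i',j)" "liftG p G (i',j) \<le> liftG p G (i'',j)"
        using coarse_col_le[OF co] h D ne by (auto simp: thetaG_def)
      then have "liftG p G (i',j) = p" using h by (auto simp: thetaG_def liftG_def)
      then show False using ne lift_p by metis
    qed
  qed
  have c1: "(i,j+1)\<in>?T" if h: "(i+1,j)\<in>?T" "(i+1,j+1)\<in>?T" "(i,j)\<in>?T" for i j
  proof -
    have D: "(i,j+1)\<in>?D" using h diag_up[OF part, of "i+1" "j+1" i] by (auto simp: thetaG_def diag_mem)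
    show ?thesis
    proof (rule ccontr)
      assume n: "(i,j+1)\<notin>?T"
      then have ne: "G (i,j+1) \<noteq> p" using D by (simp add: thetaG_def)
      have "liftG p G (i,j) \<le> liftG p G (i,j+1)" "liftG p G (i,j+1) \<le> liftG p G (i+1,j+1)"
        using coarse_row_le[OF co, of i j "j+1"] coarse_col_le[OF co, of i "j+1" "i+1"] h D ne
        by (auto simp: thetaG_def)
      then have "liftG p G (i,j+1) = p" using h by (auto simp: thetaG_def liftG_def)
      then show False using ne lift_p by metis
    qed
  qed
  have c2: "(i+1,j)\<in>?T" if h: "(i,j)\<in>?T" "(i,j+1)\<in>?T" "(i+1,j+1)\<in>?T" for i j
  proof -
    have D: "(i+1,j)\<in>?D" using h diag_left[of "i+1" "j+1" lam j] by (auto simp: thetaG_def diag_mem)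
    show ?thesis
    proof (rule ccontr)
      assume n: "(i+1,j)\<notin>?T"
      then have ne: "G (i+1,j) \<noteq> p" using D by (simp add: thetaG_def)
      have "liftG p G (i,j) \<le> liftG p G (i+1,j)" "liftG p G (i+1,j) \<le> liftG p G (i+1,j+1)"
        using coarse_col_le[OF co, of i j "i+1"] coarse_row_le[OF co, of "i+1" j "j+1"] h D ne
        by (auto simp: thetaG_def)
      then have "liftG p G (i+1,j) = p" using h by (auto simp: thetaG_def liftG_def)
      then show False using ne lift_p by metis
    qed
  qed
  show ?thesis unfolding convex_set_def using r c c1 c2 by blast
qed

definition wtF :: "('r::comm_ring_1) letter list \<Rightarrow> nat list \<Rightarrow> (nat\<times>nat \<Rightarrow> nat) \<Rightarrow> 'r" where
  "wtF Ls lam F = (\<Prod>a\<in>diagram lam. snd (Ls ! F a) (content a))"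

lemma fiber_sum:
  assumes G: "G \<in> Gset (diagram lam) (length Ls - 1)"
  shows "(\<Sum>F\<in>{F. validF Ls lam F \<and> mergeF p F = G}. wtF Ls lam F) =
    (\<Sum>s\<in>{s. s \<subseteq> thetaG (diagram lam) p G \<and> validF Ls lam (fillF (diagram lam) p G s)}.
      (\<Prod>a\<in>diagram lam - thetaG (diagram lam) p G. snd (Ls ! liftG p G a) (content a)) *
      (\<Prod>a\<in>thetaG (diagram lam) p G. if a \<in> s then snd (Ls ! p) (content a) else snd (Ls ! Suc p) (content a)))"
proof -
  let ?S = "{s. s \<subseteq> thetaG (diagram lam) p G \<and> validF Ls lam (fillF (diagram lam) p G s)}"
  have inj: "inj_on (fillF (diagram lam) p G) ?S"
    by (rule inj_on_subset[OF fill_inj]) auto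
  show ?thesis
    unfolding fiber_eq[OF G] sum.reindex[OF inj] comp_def wtF_def
    by (rule sum.cong[OF refl]) (simp add: weight_split)
qed


lemma lift_ne: "G a \<noteq> p \<Longrightarrow> liftG p G a \<noteq> p \<and> liftG p G a \<noteq> Suc p"
  by (auto simp: liftG_def)

lemma lift_inj: "liftG p G a = liftG p G b \<Longrightarrow> G a = G b"
  by (auto simp: liftG_def split: if_splits)

lemma coarse_eq:
  assumes "\<And>q. q \<noteq> p \<Longrightarrow> q \<noteq> Suc p \<Longrightarrow> Ls ! q = Ls' ! q"
  shows "coarse Ls lam p G = coarse Ls' lam p G"
proof -
  have "rowok Ls (liftG p G a) (liftG p G b) = rowok Ls' (liftG p G a) (liftG p G b)"
    "colok Ls (liftG p G a) (liftG p G b) = colok Ls' (liftG p G a) (liftG p G b)"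
    if "\<not>(G a = p \<and> G b = p)" for a b
  proof -
    have "liftG p G a = liftG p G b \<Longrightarrow> Ls ! liftG p G a = Ls' ! liftG p G a"
      using that lift_inj lift_ne assms by metis
    then show "rowok Ls (liftG p G a) (liftG p G b) = rowok Ls' (liftG p G a) (liftG p G b)"
      "colok Ls (liftG p G a) (liftG p G b) = colok Ls' (liftG p G a) (liftG p G b)"
      by (auto simp: rowok_def colok_def)
  qed
  then show ?thesis unfolding coarse_def by (simp cong: imp_cong)
qed

lemma SF_group:
  "SF Ls lam = (\<Sum>G\<in>Gset (diagram lam) (length Ls - 1). \<Sum>F\<in>{F. validF Ls lam F \<and> mergeF p F = G}. wtF Ls lam F)"
  if "Suc p < length Ls"
proof -
  have fG: "finite (Gset (diagram lam) (length Ls - 1))"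
    unfolding Gset_def by (rule finite_funs_bounded[OF finite_diagram])
  have sub: "mergeF p ` {F. validF Ls lam F} \<subseteq> Gset (diagram lam) (length Ls - 1)"
  proof
    fix G assume "G \<in> mergeF p ` {F. validF Ls lam F}"
    then obtain F where F: "validF Ls lam F" "G = mergeF p F" by auto
    have z: "\<forall>a. a \<notin> diagram lam \<longrightarrow> F a = 0" and r: "\<forall>a\<in>diagram lam. F a < length Ls"
      using F(1) unfolding validF_def by blast+
    show "G \<in> Gset (diagram lam) (length Ls - 1)"
      unfolding Gset_def F(2) mergeF_def using z r that by force
  qed
  show ?thesis
    unfolding SF_def wtF_def[symmetric]
    using sum.group[OF finite_validF fG sub, of "wtF Ls lam"] by simp
qed

theorem swap_letters:
  fixes A B :: "('r::comm_ring_1) letter list" and w :: "int \<Rightarrow> 'r"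
  assumes part: "is_partition lam" and wx: "\<And>c. c \<ge> d \<Longrightarrow> w c = x"
  shows "SF (A @ [(True, w), (False, \<lambda>c. if c \<ge> d then y else 0)] @ B) lam =
         SF (A @ [(False, \<lambda>c. if c \<ge> d+1 then y else 0), (True, \<lambda>c. w c + (if c = d then y else 0))] @ B) lam"
proof -
  define Yd where "Yd = (\<lambda>c::int. if c \<ge> d then y else 0)"
  define Yd1 where "Yd1 = (\<lambda>c::int. if c \<ge> d+1 then y else 0)"
  define w' where "w' = (\<lambda>c. w c + (if c = d then y else 0))"
  define Ls where "Ls = A @ [(True, w), (False, Yd)] @ B"
  define Ls' where "Ls' = A @ [(False, Yd1), (True, w')] @ B"
  define p where "p = length A"
  have len: "length Ls' = length Ls" "Suc p < length Ls" by (auto simp: Ls_def Ls'_def p_def)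
  have nthL: "Ls ! p = (True, w)" "Ls ! Suc p = (False, Yd)" "Ls' ! p = (False, Yd1)" "Ls' ! Suc p = (True, w')"
    by (auto simp: Ls_def Ls'_def p_def nth_append)
  have tt: "fst (Ls ! p)" "\<not> fst (Ls ! Suc p)" "\<not> fst (Ls' ! p)" "fst (Ls' ! Suc p)" using nthL by auto
  have oth: "Ls ! q = Ls' ! q" if "q \<noteq> p" "q \<noteq> Suc p" for q
  proof (cases "q < p")
    case True then show ?thesis by (simp add: Ls_def Ls'_def p_def nth_append)
  next
    case False
    then have "q - length A \<ge> 2" using that by (auto simp: p_def)
    then obtain k where "q - length A = Suc (Suc k)" by (metis add_2_eq_Suc le_Suc_ex)
    then show ?thesis using False by (simp add: Ls_def Ls'_def p_def nth_append)
  qed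
  have main: "(\<Sum>F\<in>{F. validF Ls lam F \<and> mergeF p F = G}. wtF Ls lam F) =
              (\<Sum>F\<in>{F. validF Ls' lam F \<and> mergeF p F = G}. wtF Ls' lam F)"
    if G: "G \<in> Gset (diagram lam) (length Ls - 1)" for G
  proof -
    let ?D = "diagram lam" let ?T = "thetaG (diagram lam) p G"
    have G': "G \<in> Gset (diagram lam) (length Ls' - 1)" using G len by simp
    have out: "(\<Prod>a\<in>?D - ?T. snd (Ls ! liftG p G a) (content a)) = (\<Prod>a\<in>?D - ?T. snd (Ls' ! liftG p G a) (content a))"
    proof (rule prod.cong[OF refl])
      fix a assume "a \<in> ?D - ?T"
      then have "G a \<noteq> p" by (auto simp: thetaG_def)
      then show "snd (Ls ! liftG p G a) (content a) = snd (Ls' ! liftG p G a) (content a)"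
        using oth lift_ne by metis
    qed
    define Ow where "Ow = (\<Prod>a\<in>?D - ?T. snd (Ls ! liftG p G a) (content a))"
    have co: "coarse Ls lam p G = coarse Ls' lam p G" using coarse_eq oth by metis
    have l: "(\<Sum>F\<in>{F. validF Ls lam F \<and> mergeF p F = G}. wtF Ls lam F) =
      (if coarse Ls lam p G then Ow * (\<Prod>a\<in>?T. z1 ?T w y d a) else 0)"
    proof -
      have "(\<Sum>F\<in>{F. validF Ls lam F \<and> mergeF p F = G}. wtF Ls lam F) =
        (\<Sum>s\<in>(if coarse Ls lam p G then Sset ?T (hasR ?T) (hasU ?T) else {}).
          Ow * (\<Prod>a\<in>?T. if a \<in> s then w (content a) else Yd (content a)))"
        unfolding fiber_sum[OF G] sset1[OF G len(2) tt(1,2)] apply (simp only: nthL snd_conv) by (simp add: Ow_def)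
      also have "\<dots> = (if coarse Ls lam p G then Ow * (\<Prod>a\<in>?T. z1 ?T w y d a) else 0)"
      proof (cases "coarse Ls lam p G")
        case True
        have fT: "finite ?T" using finite_diagram[of lam] by (auto simp: thetaG_def)
        show ?thesis using True unfolding z1_def Yd_def
          by (simp add: sum_distrib_left[symmetric] subset_sum_prod[OF fT])
      qed simp
      finally show ?thesis .
    qed
    have r: "(\<Sum>F\<in>{F. validF Ls' lam F \<and> mergeF p F = G}. wtF Ls' lam F) =
      (if coarse Ls' lam p G then Ow * (\<Prod>a\<in>?T. z2 ?T w y d a) else 0)"
    proof -
      have "(\<Sum>F\<in>{F. validF Ls' lam F \<and> mergeF p F = G}. wtF Ls' lam F) =
        (\<Sum>s\<in>(if coarse Ls' lam p G then Sset ?T (hasD ?T) (hasL ?T) else {}).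
          Ow * (\<Prod>a\<in>?T. if a \<in> s then Yd1 (content a) else w' (content a)))"
        unfolding fiber_sum[OF G'] sset2[OF G' len(2)[folded len(1)] tt(3,4)] using out apply (simp only: nthL snd_conv) by (simp add: Ow_def)
      also have "\<dots> = (if coarse Ls' lam p G then Ow * (\<Prod>a\<in>?T. z2 ?T w y d a) else 0)"
      proof (cases "coarse Ls' lam p G")
        case True
        have fT: "finite ?T" using finite_diagram[of lam] by (auto simp: thetaG_def)
        show ?thesis using True unfolding z2_def Yd1_def w'_def
          by (simp add: sum_distrib_left[symmetric] subset_sum_prod[OF fT])
      qed simp
      finally show ?thesis .
    qed
    show ?thesis
    proof (cases "coarse Ls lam p G")
      case True
      have "cvx ?T"
        using coarse_convex[OF part True] finite_diagram[of lam] by (unfold_locales) (auto simp: thetaG_def)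
      then have "(\<Prod>a\<in>?T. z1 ?T w y d a) = (\<Prod>a\<in>?T. z2 ?T w y d a)"
        using cvx.core wx by blast
      then show ?thesis using l r co by simp
    next
      case False then show ?thesis using l r co by simp
    qed
  qed
  have "SF Ls lam = (\<Sum>G\<in>Gset (diagram lam) (length Ls - 1). \<Sum>F\<in>{F. validF Ls lam F \<and> mergeF p F = G}. wtF Ls lam F)"
    by (rule SF_group[OF len(2)])
  also have "\<dots> = (\<Sum>G\<in>Gset (diagram lam) (length Ls - 1). \<Sum>F\<in>{F. validF Ls' lam F \<and> mergeF p F = G}. wtF Ls' lam F)"
    by (rule sum.cong[OF refl]) (rule main)
  also have "\<dots> = SF Ls' lam"
    using SF_group[where Ls=Ls', OF len(2)[folded len(1)]] len(1) by simp
  finally have "SF Ls lam = SF Ls' lam" .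
  then show ?thesis by (simp add: Ls_def Ls'_def Yd_def Yd1_def w'_def)
qed


definition Ylet :: "(int \<Rightarrow> 'r::comm_ring_1) \<Rightarrow> int \<Rightarrow> int \<Rightarrow> 'r letter" where
  "Ylet a e k = (False, \<lambda>c. if c \<ge> e - k then - a k else 0)"

lemma pass_block:
  fixes w :: "int \<Rightarrow> 'r::comm_ring_1"
  assumes part: "is_partition lam"
  shows "sorted_wrt (>) ks \<Longrightarrow> (\<forall>k\<in>set ks. \<forall>c\<ge>e-k. w c = x0) \<Longrightarrow>
    SF (A @ [(True, w)] @ map (Ylet a e) ks @ B) lam =
    SF (A @ map (Ylet a (e+1)) ks @ [(True, \<lambda>c. w c + (if e - c \<in> set ks then - a (e - c) else 0))] @ B) lam"
proof (induction ks arbitrary: A w)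
  case Nil
  then show ?case by simp
next
  case (Cons k ks)
  define w1 where "w1 = (\<lambda>c. w c + (if c = e - k then - a k else 0))"
  have s: "SF (A @ [(True, w)] @ map (Ylet a e) (k # ks) @ B) lam =
           SF (A @ [(True, w), (False, \<lambda>c. if c \<ge> e - k then - a k else 0)] @ (map (Ylet a e) ks @ B)) lam"
    by (simp add: Ylet_def)
  also have "\<dots> = SF (A @ [(False, \<lambda>c. if c \<ge> e - k + 1 then - a k else 0), (True, w1)] @ (map (Ylet a e) ks @ B)) lam"
    unfolding w1_def by (rule swap_letters[OF part, where x=x0]) (use Cons.prems in auto)
  also have "\<dots> = SF ((A @ [Ylet a (e+1) k]) @ [(True, w1)] @ map (Ylet a e) ks @ B) lam"
    by (simp add: Ylet_def algebra_simps)
  also have "\<dots> = SF ((A @ [Ylet a (e+1) k]) @ map (Ylet a (e+1)) ks @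
        [(True, \<lambda>c. w1 c + (if e - c \<in> set ks then - a (e - c) else 0))] @ B) lam"
  proof (rule Cons.IH)
    show "sorted_wrt (>) ks" using Cons.prems by simp
    show "\<forall>k'\<in>set ks. \<forall>c\<ge>e - k'. w1 c = x0"
    proof (intro ballI allI impI)
      fix k' c assume "k' \<in> set ks" "e - k' \<le> c"
      moreover have "k' < k" using Cons.prems(1) \<open>k' \<in> set ks\<close> by simp
      ultimately show "w1 c = x0" using Cons.prems(2) \<open>k' \<in> set ks\<close> by (auto simp: w1_def)
    qed
  qed
  also have "(\<lambda>c. w1 c + (if e - c \<in> set ks then - a (e - c) else 0)) =
             (\<lambda>c. w c + (if e - c \<in> set (k # ks) then - a (e - c) else 0))"
  proof
    fix c
    have "k \<notin> set ks" using Cons.prems(1) by auto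
    then show "w1 c + (if e - c \<in> set ks then - a (e - c) else 0) = w c + (if e - c \<in> set (k # ks) then - a (e - c) else 0)"
      by (auto simp: w1_def)
  qed
  finally show ?case by simp
qed

definition Xlet :: "(nat \<Rightarrow> 'r::comm_ring_1) \<Rightarrow> nat \<Rightarrow> 'r letter" where
  "Xlet x m = (True, \<lambda>c. x m)"
definition Xfin :: "(nat \<Rightarrow> 'r::comm_ring_1) \<Rightarrow> (int \<Rightarrow> 'r) \<Rightarrow> int list \<Rightarrow> nat \<Rightarrow> 'r letter" where
  "Xfin x a ks m = (True, \<lambda>c. x m + (if int m - c \<in> set ks then - a (int m - c) else 0))"

lemma rev_upt_split: "m < n \<Longrightarrow> rev [m..<n] = rev [Suc m..<n] @ [m]"
  by (simp add: upt_rec)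

lemma iterate:
  assumes part: "is_partition lam" and ks: "sorted_wrt (>) ks"
  shows "m \<le> n \<Longrightarrow> SF (map (Xlet x) (rev [1..<n+1]) @ map (Ylet a 1) ks) lam =
    SF (map (Xlet x) (rev [m+1..<n+1]) @ map (Ylet a (int m + 1)) ks @ map (Xfin x a ks) (rev [1..<m+1])) lam"
proof (induction m)
  case 0 then show ?case by simp
next
  case (Suc m)
  then have IH: "SF (map (Xlet x) (rev [1..<n+1]) @ map (Ylet a 1) ks) lam =
    SF (map (Xlet x) (rev [m+1..<n+1]) @ map (Ylet a (int m + 1)) ks @ map (Xfin x a ks) (rev [1..<m+1])) lam"
    by simp
  have "m + 1 < n + 1" using Suc.prems by simp
  then have r: "rev [m+1..<n+1] = rev [m+2..<n+1] @ [m+1]" by (simp add: rev_upt_split)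
  have "SF (map (Xlet x) (rev [m+1..<n+1]) @ map (Ylet a (int m + 1)) ks @ map (Xfin x a ks) (rev [1..<m+1])) lam
    = SF (map (Xlet x) (rev [m+2..<n+1]) @ [(True, \<lambda>c. x (m+1))] @ map (Ylet a (int (m+1))) ks @ map (Xfin x a ks) (rev [1..<m+1])) lam"
  proof -
    have e: "int m + 1 = int (m+1)" by simp
    show ?thesis unfolding r e by (simp add: Xlet_def del: upt_Suc)
  qed
  also have "\<dots> = SF (map (Xlet x) (rev [m+2..<n+1]) @ map (Ylet a (int (m+1) + 1)) ks @
     [(True, \<lambda>c. x (m+1) + (if int (m+1) - c \<in> set ks then - a (int (m+1) - c) else 0))] @ map (Xfin x a ks) (rev [1..<m+1])) lam"
    by (rule pass_block[OF part ks]) auto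
  also have "\<dots> = SF (map (Xlet x) (rev [Suc m+1..<n+1]) @ map (Ylet a (int (Suc m) + 1)) ks @ map (Xfin x a ks) (rev [1..<Suc m+1])) lam"
  proof -
    have e1: "Suc m + 1 = m + 2" by simp
    have e2: "rev [1..<Suc m+1] = (m+1) # rev [1..<m+1]" by simp
    have e3: "int (Suc m) + 1 = int (m+1) + 1" by simp
    have e4: "(True, \<lambda>c. x (m+1) + (if int (m+1) - c \<in> set ks then - a (int (m+1) - c) else 0)) = Xfin x a ks (m+1)"
      unfolding Xfin_def by (rule refl)
    show ?thesis unfolding e1 e2 e3 e4 by simp
  qed
  finally show ?case using IH by simp
qed


lemma rowok_shift: "rowok (P @ Q) (u + length P) (v + length P) = rowok Q u v"
  by (simp add: rowok_def nth_append)
lemma colok_shift: "colok (P @ Q) (u + length P) (v + length P) = colok Q u v"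
  by (simp add: colok_def nth_append)

lemma diag11:
  assumes part: "is_partition lam" and a: "(i,j) \<in> diagram lam"
  shows "(1,1) \<in> diagram lam"
proof -
  have ij: "1 \<le> i" "1 \<le> j" using a by (auto simp: diag_mem)
  have a1: "(1,j) \<in> diagram lam" using diag_up[OF part a] ij by simp
  show "(1,1) \<in> diagram lam" using diag_left[OF a1] ij by simp
qed

lemma valid_min:
  assumes part: "is_partition lam" and F: "validF Ls lam F" and a: "(i,j) \<in> diagram lam"
  shows "(1,1) \<in> diagram lam" "F (1,1) \<le> F (i,j)"
proof -
  have ij: "1 \<le> i" "1 \<le> j" using a by (auto simp: diag_mem)
  have a1: "(1,j) \<in> diagram lam" using diag_up[OF part a] ij by simp
  show "(1,1) \<in> diagram lam" using diag_left[OF a1] ij by simp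
  have "F (1,1) \<le> F (1,j)"
  proof (cases "j = 1")
    case False
    then have "rowok Ls (F (1,1)) (F (1,j))" using F a1 \<open>(1,1) \<in> diagram lam\<close> ij unfolding validF_def by auto
    then show ?thesis by (simp add: rowok_def)
  qed simp
  also have "F (1,j) \<le> F (i,j)"
  proof (cases "i = 1")
    case False
    then have "colok Ls (F (1,j)) (F (i,j))" using F a1 a ij unfolding validF_def by auto
    then show ?thesis by (simp add: colok_def)
  qed simp
  finally show "F (1,1) \<le> F (i,j)" .
qed

lemma drop_prefix:
  fixes P Q :: "('r::comm_ring_1) letter list"
  assumes part: "is_partition lam" and P: "\<forall>L\<in>set P. snd L 0 = 0"
  shows "SF (P @ Q) lam = SF Q lam"
proof -
  let ?D = "diagram lam" let ?k = "length P"
  define V where "V = {F. validF (P @ Q) lam F}"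
  define VQ where "VQ = {G. validF Q lam G}"
  define sh where "sh = (\<lambda>G a. if a \<in> ?D then G a + ?k else 0)"
  have fV: "finite V" unfolding V_def by (rule finite_validF)
  show ?thesis
  proof (cases "?D = {}")
    case True
    have "V = {\<lambda>_. 0}" "VQ = {\<lambda>_. 0}" using True unfolding V_def VQ_def validF_def by auto
    then show ?thesis by (simp add: SF_def V_def[symmetric] VQ_def[symmetric] True)
  next
    case False
    then obtain i j where "(i,j) \<in> ?D" by auto
    then have d11: "(1,1) \<in> ?D" using diag11[OF part] by blast
    have V1: "(\<Sum>F\<in>{F\<in>V. F (1,1) < ?k}. wtF (P@Q) lam F) = 0"
    proof (rule sum.neutral, rule ballI)
      fix F assume "F \<in> {F\<in>V. F (1,1) < ?k}"
      then have lt: "F (1,1) < ?k" by simp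
      have "snd ((P @ Q) ! F (1,1)) (content (1,1)) = 0"
        using lt P by (simp add: nth_append content_def)
      then show "wtF (P@Q) lam F = 0" unfolding wtF_def
        by (rule prod_zero[OF finite_diagram, rule_format, OF bexI[OF _ d11]])
    qed
    have V2: "{F\<in>V. ?k \<le> F (1,1)} = sh ` VQ"
    proof
      show "{F\<in>V. ?k \<le> F (1,1)} \<subseteq> sh ` VQ"
      proof
        fix F assume F: "F \<in> {F\<in>V. ?k \<le> F (1,1)}"
        then have vF: "validF (P@Q) lam F" by (simp add: V_def)
        have ge: "?k \<le> F a" if "a \<in> ?D" for a
          using valid_min(2)[OF part vF, of "fst a" "snd a"] that F by auto
        define G where "G = (\<lambda>a. if a \<in> ?D then F a - ?k else 0)"
        have e: "F = sh G"
        proof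
          fix a
          have z: "a \<notin> ?D \<Longrightarrow> F a = 0" using vF unfolding validF_def by blast
          show "F a = sh G a"
            using ge[of a] z unfolding sh_def G_def by auto
        qed
        have "validF Q lam G"
          unfolding validF_def
        proof (intro conjI allI impI ballI)
          fix a assume "a \<notin> ?D" then show "G a = 0" by (simp add: G_def)
        next
          fix a assume "a \<in> ?D"
          moreover have "F a < length P + length Q" using vF \<open>a \<in> ?D\<close> unfolding validF_def by simp
          ultimately show "G a < length Q" using ge[of a] by (simp add: G_def)
        next
          fix i j j' assume h: "(i,j)\<in>?D" "(i,j')\<in>?D" "j < j'"
          then have "rowok (P@Q) (F (i,j)) (F (i,j'))" using vF unfolding validF_def by blast
          moreover have "F (i,j) = G (i,j) + ?k" "F (i,j') = G (i,j') + ?k" using ge h by (auto simp: G_def)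
          ultimately show "rowok Q (G (i,j)) (G (i,j'))" using rowok_shift by metis
        next
          fix i i' j assume h: "(i,j)\<in>?D" "(i',j)\<in>?D" "i < i'"
          then have "colok (P@Q) (F (i,j)) (F (i',j))" using vF unfolding validF_def by blast
          moreover have "F (i,j) = G (i,j) + ?k" "F (i',j) = G (i',j) + ?k" using ge h by (auto simp: G_def)
          ultimately show "colok Q (G (i,j)) (G (i',j))" using colok_shift by metis
        qed
        then show "F \<in> sh ` VQ" using e VQ_def by blast
      qed
    next
      show "sh ` VQ \<subseteq> {F\<in>V. ?k \<le> F (1,1)}"
      proof
        fix F assume "F \<in> sh ` VQ"
        then obtain G where G: "validF Q lam G" "F = sh G" by (auto simp: VQ_def)
        have "validF (P@Q) lam F"
          unfolding validF_def
        proof (intro conjI allI impI ballI)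
          fix a assume "a \<notin> ?D" then show "F a = 0" by (simp add: G(2) sh_def)
        next
          fix a assume "a \<in> ?D"
          then have "G a < length Q" using G(1) unfolding validF_def by simp
          then show "F a < length (P@Q)" using \<open>a \<in> ?D\<close> by (simp add: G(2) sh_def)
        next
          fix i j j' assume h: "(i,j)\<in>?D" "(i,j')\<in>?D" "j < j'"
          then have "rowok Q (G (i,j)) (G (i,j'))" using G(1) unfolding validF_def by blast
          moreover have "F (i,j) = G (i,j) + ?k" "F (i,j') = G (i,j') + ?k" using h by (auto simp: G(2) sh_def)
          ultimately show "rowok (P@Q) (F (i,j)) (F (i,j'))" using rowok_shift by metis
        next
          fix i i' j assume h: "(i,j)\<in>?D" "(i',j)\<in>?D" "i < i'"
          then have "colok Q (G (i,j)) (G (i',j))" using G(1) unfolding validF_def by blast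
          moreover have "F (i,j) = G (i,j) + ?k" "F (i',j) = G (i',j) + ?k" using h by (auto simp: G(2) sh_def)
          ultimately show "colok (P@Q) (F (i,j)) (F (i',j))" using colok_shift by metis
        qed
        then show "F \<in> {F\<in>V. ?k \<le> F (1,1)}" using G d11 by (auto simp: V_def sh_def)
      qed
    qed
    have inj: "inj_on sh VQ"
    proof (rule inj_onI)
      fix G G' assume "G \<in> VQ" "G' \<in> VQ" "sh G = sh G'"
      then have z: "\<forall>a. a \<notin> ?D \<longrightarrow> G a = 0" "\<forall>a. a \<notin> ?D \<longrightarrow> G' a = 0" "sh G = sh G'"
        unfolding VQ_def validF_def by blast+
      show "G = G'"
      proof
        fix a show "G a = G' a"
        proof (cases "a \<in> ?D")
          case True
          have "sh G a = sh G' a" using z(3) by simp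
          then show ?thesis using True by (simp add: sh_def)
        next
          case False
          then show ?thesis using z(1) z(2) by metis
        qed
      qed
    qed
    have wt: "wtF (P@Q) lam (sh G) = wtF Q lam G" for G
      unfolding wtF_def
    proof (rule prod.cong[OF refl])
      fix a assume "a \<in> ?D"
      then have "sh G a = G a + ?k" by (simp add: sh_def)
      then show "snd ((P @ Q) ! sh G a) (content a) = snd (Q ! G a) (content a)"
        by (simp add: nth_append)
    qed
    have "SF (P@Q) lam = (\<Sum>F\<in>V. wtF (P@Q) lam F)" by (simp add: SF_def V_def wtF_def)
    also have "\<dots> = (\<Sum>F\<in>{F\<in>V. F (1,1) < ?k}. wtF (P@Q) lam F) + (\<Sum>F\<in>{F\<in>V. ?k \<le> F (1,1)}. wtF (P@Q) lam F)"
    proof -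
      have e: "V = {F\<in>V. F (1,1) < ?k} \<union> {F\<in>V. ?k \<le> F (1,1)}" by auto
      have f1: "finite {F\<in>V. F (1,1) < ?k}" "finite {F\<in>V. ?k \<le> F (1,1)}" using fV by auto
      have dj: "{F\<in>V. F (1,1) < ?k} \<inter> {F\<in>V. ?k \<le> F (1,1)} = {}" by auto
      show ?thesis by (subst e, rule sum.union_disjoint[OF f1 dj])
    qed
    also have "\<dots> = (\<Sum>G\<in>VQ. wtF Q lam G)"
      unfolding V1 V2 sum.reindex[OF inj] comp_def wt by simp
    also have "\<dots> = SF Q lam" by (simp add: SF_def VQ_def wtF_def)
    finally show ?thesis .
  qed
qed


definition ksM :: "nat \<Rightarrow> nat list \<Rightarrow> int list" where
  "ksM n lam = map (\<lambda>r. int n - int r) [0..<n + sum_list lam + 1]"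

lemma ks_set_eq: "set (ksM n lam) = (\<lambda>r. int n - int r) ` {0..<n + sum_list lam + 1}"
  unfolding ksM_def by (simp only: set_map set_upt)

lemma ks_set: "k \<in> set (ksM n lam) \<longleftrightarrow> - int (sum_list lam) \<le> k \<and> k \<le> int n"
proof
  assume "k \<in> set (ksM n lam)"
  then obtain r where "r < n + sum_list lam + 1" "k = int n - int r" unfolding ks_set_eq by auto
  then show "- int (sum_list lam) \<le> k \<and> k \<le> int n" by simp
next
  assume h: "- int (sum_list lam) \<le> k \<and> k \<le> int n"
  define r where "r = nat (int n - k)"
  have "r < n + sum_list lam + 1" "k = int n - int r" using h by (auto simp: r_def)
  then show "k \<in> set (ksM n lam)" unfolding ks_set_eq by (auto intro!: image_eqI[of _ _ r])
qed

lemma ks_sorted: "sorted_wrt (>) (ksM n lam)"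
  unfolding ksM_def sorted_wrt_map
  by (rule sorted_wrt_mono_rel[OF _ sorted_wrt_upt]) auto

lemma ks_nth: "r < n + sum_list lam + 1 \<Longrightarrow> ksM n lam ! r = int n - int r"
  unfolding ksM_def by (simp del: upt_Suc)

lemma ks_len: "length (ksM n lam) = n + sum_list lam + 1"
  unfolding ksM_def by (simp del: upt_Suc)

lemma rev_upt_nth: "q < n \<Longrightarrow> rev [1..<n+1] ! q = n - q"
  by (simp add: rev_nth del: upt_Suc)

lemma col_le_sum: "(i,j) \<in> diagram lam \<Longrightarrow> j \<le> sum_list lam"
proof -
  assume a: "(i,j) \<in> diagram lam"
  then have "j \<le> lam ! (i-1)" "i - 1 < length lam" by (auto simp: diag_mem)
  moreover have "lam ! (i-1) \<le> sum_list lam" using member_le_sum_list[OF nth_mem[OF calculation(2)]] by simp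
  ultimately show ?thesis by simp
qed

lemma rt_bound:
  assumes part: "is_partition lam" and T: "reverse_tableau n lam T"
  shows "(i,j) \<in> diagram lam \<Longrightarrow> T (i,j) + i \<le> n + 1"
proof (induction i)
  case 0 then show ?case by (simp add: diag_mem)
next
  case (Suc i)
  show ?case
  proof (cases "i = 0")
    case True then show ?thesis using T Suc.prems unfolding reverse_tableau_def by auto
  next
    case False
    have d: "(i,j) \<in> diagram lam" using diag_up[OF part Suc.prems] False by simp
    have "T (Suc i, j) < T (i,j)" using T Suc.prems d unfolding reverse_tableau_def by auto
    then show ?thesis using Suc.IH[OF d] by simp
  qed
qed

lemma transA:
  fixes x :: "nat \<Rightarrow> 'r::comm_ring_1" and a :: "int \<Rightarrow> 'r"
  assumes part: "is_partition lam"
  shows "double_schur n lam x a = SF (map (Xfin x a (ksM n lam)) (rev [1..<n+1])) lam"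
proof -
  let ?D = "diagram lam"
  define Ls where "Ls = map (Xfin x a (ksM n lam)) (rev [1..<n+1])"
  have lenL: "length Ls = n" by (simp add: Ls_def)
  have LsN: "q < n \<Longrightarrow> Ls ! q = Xfin x a (ksM n lam) (n - q)" for q
    unfolding Ls_def using rev_upt_nth[of q n] by (simp del: upt_Suc)
  have fstL: "q < n \<Longrightarrow> fst (Ls ! q)" for q by (simp add: LsN Xfin_def)
  define jm where "jm = (\<lambda>T :: nat\<times>nat \<Rightarrow> nat. \<lambda>al. if al \<in> ?D then n - T al else 0)"
  define im where "im = (\<lambda>F :: nat\<times>nat \<Rightarrow> nat. \<lambda>al. if al \<in> ?D then n - F al else 0)"
  have "(\<Sum>T\<in>{T. reverse_tableau n lam T}. \<Prod>al\<in>?D. x (T al) - a (int (T al) - content al)) =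
        (\<Sum>F\<in>{F. validF Ls lam F}. wtF Ls lam F)"
  proof (rule sum.reindex_bij_witness[where i=im and j=jm])
    fix T assume "T \<in> {T. reverse_tableau n lam T}"
    then have T: "reverse_tableau n lam T" by simp
    have z: "al \<notin> ?D \<Longrightarrow> T al = 0" and r: "al \<in> ?D \<Longrightarrow> 1 \<le> T al \<and> T al \<le> n" for al
      using T unfolding reverse_tableau_def by blast+
    show "im (jm T) = T"
    proof
      fix al show "im (jm T) al = T al" using z[of al] r[of al] by (auto simp: im_def jm_def)
    qed
    show "jm T \<in> {F. validF Ls lam F}"
      unfolding validF_def mem_Collect_eq
    proof (intro conjI allI impI ballI)
      fix al assume "al \<notin> ?D" then show "jm T al = 0" by (simp add: jm_def)
    next
      fix al assume "al \<in> ?D" then show "jm T al < length Ls" using r[of al] by (simp add: jm_def lenL)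
    next
      fix i j j' assume h: "(i,j)\<in>?D" "(i,j')\<in>?D" "j < j'"
      then have "T (i,j') \<le> T (i,j)" using T unfolding reverse_tableau_def by blast
      then show "rowok Ls (jm T (i,j)) (jm T (i,j'))"
        using h r[of "(i,j)"] r[of "(i,j')"] fstL by (auto simp: rowok_def jm_def)
    next
      fix i i' j assume h: "(i,j)\<in>?D" "(i',j)\<in>?D" "i < i'"
      then have "T (i',j) < T (i,j)" using T unfolding reverse_tableau_def by blast
      then show "colok Ls (jm T (i,j)) (jm T (i',j))"
        using h r[of "(i,j)"] r[of "(i',j)"] by (auto simp: colok_def jm_def)
    qed
    show "wtF Ls lam (jm T) = (\<Prod>al\<in>?D. x (T al) - a (int (T al) - content al))"
      unfolding wtF_def
    proof (rule prod.cong[OF refl])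
      fix al assume al: "al \<in> ?D"
      obtain i j where ij: "al = (i,j)" by (cases al)
      have b1: "T (i,j) + i \<le> n + 1" using rt_bound[OF part T] al ij by simp
      have b2: "j \<le> sum_list lam" using col_le_sum al ij by simp
      have b3: "1 \<le> i" "1 \<le> j" using al ij by (auto simp: diag_mem)
      have mem: "int (T al) - content al \<in> set (ksM n lam)"
        unfolding ks_set using b1 b2 b3 r[OF al] ij by (simp add: content_def)
      have "jm T al < n" "n - jm T al = T al" using r[OF al] al by (auto simp: jm_def)
      then show "snd (Ls ! jm T al) (content al) = x (T al) - a (int (T al) - content al)"
        using mem by (simp add: LsN Xfin_def)
    qed
  next
    fix F assume "F \<in> {F. validF Ls lam F}"
    then have F: "validF Ls lam F" by simp
    have z: "al \<notin> ?D \<Longrightarrow> F al = 0" and r: "al \<in> ?D \<Longrightarrow> F al < n" for al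
      using F unfolding validF_def lenL by blast+
    show "jm (im F) = F"
    proof
      fix al show "jm (im F) al = F al" using z[of al] r[of al] by (auto simp: im_def jm_def)
    qed
    show "im F \<in> {T. reverse_tableau n lam T}"
      unfolding reverse_tableau_def mem_Collect_eq
    proof (intro conjI allI impI ballI)
      fix al assume "al \<notin> ?D" then show "im F al = 0" by (simp add: im_def)
    next
      fix al assume "al \<in> ?D" then show "1 \<le> im F al" "im F al \<le> n" using r[of al] by (auto simp: im_def)
    next
      fix i j j' assume h: "(i,j)\<in>?D" "(i,j')\<in>?D" "j < j'"
      then have "rowok Ls (F (i,j)) (F (i,j'))" using F unfolding validF_def by blast
      then show "im F (i,j') \<le> im F (i,j)" using h by (auto simp: rowok_def im_def)
    next
      fix i i' j assume h: "(i,j)\<in>?D" "(i',j)\<in>?D" "i < i'"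
      then have "colok Ls (F (i,j)) (F (i',j))" using F unfolding validF_def by blast
      then have "F (i,j) < F (i',j)" using fstL r h by (auto simp: colok_def)
      then show "im F (i',j) < im F (i,j)" using h r[of "(i',j)"] by (auto simp: im_def)
    qed
  qed
  then show ?thesis by (simp add: double_schur_def SF_def wtF_def Ls_def)
qed


lemma assemble:
  fixes x :: "nat \<Rightarrow> 'r::comm_ring_1" and a :: "int \<Rightarrow> 'r"
  assumes part: "is_partition lam"
  shows "SF (map (Xlet x) (rev [1..<n+1]) @ map (Ylet a 1) (ksM n lam)) lam = double_schur n lam x a"
proof -
  have "SF (map (Xlet x) (rev [1..<n+1]) @ map (Ylet a 1) (ksM n lam)) lam =
    SF (map (Xlet x) (rev [n+1..<n+1]) @ map (Ylet a (int n + 1)) (ksM n lam) @ map (Xfin x a (ksM n lam)) (rev [1..<n+1])) lam"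
    by (rule iterate[OF part ks_sorted]) simp
  also have "\<dots> = SF (map (Ylet a (int n + 1)) (ksM n lam) @ map (Xfin x a (ksM n lam)) (rev [1..<n+1])) lam"
    by simp
  also have "\<dots> = SF (map (Xfin x a (ksM n lam)) (rev [1..<n+1])) lam"
  proof (rule drop_prefix[OF part])
    show "\<forall>L\<in>set (map (Ylet a (int n + 1)) (ksM n lam)). snd L 0 = 0"
      using ks_set by (auto simp: Ylet_def)
  qed
  also have "\<dots> = double_schur n lam x a" by (rule transA[OF part, symmetric])
  finally show ?thesis .
qed


lemma col_len_props:
  assumes part: "is_partition lam" and a: "(i,j) \<in> diagram lam"
  shows "i \<le> col_len lam j" "(col_len lam j, j) \<in> diagram lam"
proof -
  define S where "S = {i. (i,j) \<in> diagram lam}"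
  have fS: "finite S"
  proof -
    have "S \<subseteq> {1..length lam}" by (auto simp: S_def diag_mem)
    then show ?thesis using finite_subset by blast
  qed
  have iS: "i \<in> S" using a by (simp add: S_def)
  define Mx where "Mx = Max S"
  have MxS: "Mx \<in> S" using fS iS unfolding Mx_def by (intro Max_in) auto
  have iM: "i \<le> Mx" using fS iS by (simp add: Mx_def)
  have "S = {1..Mx}"
  proof
    show "S \<subseteq> {1..Mx}" using fS by (auto simp: S_def diag_mem Mx_def)
  next
    show "{1..Mx} \<subseteq> S"
    proof
      fix i' assume "i' \<in> {1..Mx}"
      then show "i' \<in> S" using diag_up[OF part, of Mx j i'] MxS by (auto simp: S_def)
    qed
  qed
  then have "col_len lam j = Mx" by (simp add: col_len_def S_def[symmetric])
  then show "i \<le> col_len lam j" "(col_len lam j, j) \<in> diagram lam" using iM MxS by (auto simp: S_def)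
qed

locale tb =
  fixes n :: nat and lam :: "nat list" and x :: "nat \<Rightarrow> 'r::comm_ring_1" and a :: "int \<Rightarrow> 'r"
  assumes part: "is_partition lam"
begin

abbreviation "D \<equiv> diagram lam"
abbreviation "Mk \<equiv> n + sum_list lam + 1"
definition "Ls = map (Xlet x) (rev [1..<n+1]) @ map (Ylet a 1) (ksM n lam)"

lemma lenL: "length Ls = n + Mk"
  by (simp add: Ls_def ks_len del: upt_Suc)

lemma LsX: "q < n \<Longrightarrow> Ls ! q = (True, \<lambda>c. x (n - q))"
  unfolding Ls_def using rev_upt_nth[of q n] by (simp add: nth_append Xlet_def del: upt_Suc)

lemma LsY: "r < Mk \<Longrightarrow> Ls ! (n + r) = (False, \<lambda>c. if c \<ge> 1 - (int n - int r) then - a (int n - int r) else 0)"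
  unfolding Ls_def using ks_nth[of r n lam] ks_len[of n lam] by (simp add: nth_append Ylet_def del: upt_Suc)

lemma LsY': "n \<le> q \<Longrightarrow> q < n + Mk \<Longrightarrow> Ls ! q = (False, \<lambda>c. if c \<ge> 1 - (int n - int (q - n)) then - a (int n - int (q - n)) else 0)"
  using LsY[of "q - n"] by simp

definition good :: "(nat\<times>nat \<Rightarrow> nat) \<Rightarrow> bool" where
  "good F \<longleftrightarrow> (\<forall>al\<in>D. n \<le> F al \<longrightarrow> content al \<ge> 1 - (int n - int (F al - n)))"

lemma step1: "SF Ls lam = (\<Sum>F\<in>{F. validF Ls lam F \<and> good F}. wtF Ls lam F)"
proof -
  have "SF Ls lam = (\<Sum>F\<in>{F. validF Ls lam F}. wtF Ls lam F)" by (simp add: SF_def wtF_def)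
  also have "\<dots> = (\<Sum>F\<in>{F. validF Ls lam F \<and> good F}. wtF Ls lam F)"
  proof (rule sum.mono_neutral_right[OF finite_validF])
    show "{F. validF Ls lam F \<and> good F} \<subseteq> {F. validF Ls lam F}" by auto
    show "\<forall>F\<in>{F. validF Ls lam F} - {F. validF Ls lam F \<and> good F}. wtF Ls lam F = 0"
    proof
      fix F assume "F \<in> {F. validF Ls lam F} - {F. validF Ls lam F \<and> good F}"
      then have v: "validF Ls lam F" and ng: "\<not> good F" by auto
      then obtain al where al: "al \<in> D" "n \<le> F al" "\<not> content al \<ge> 1 - (int n - int (F al - n))"
        unfolding good_def by auto
      have "F al < n + Mk" using v al(1) lenL unfolding validF_def by auto
      then have "snd (Ls ! F al) (content al) = 0" using LsY'[OF al(2)] al(3) by simp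
      then show "wtF Ls lam F = 0" unfolding wtF_def
        by (rule prod_zero[OF finite_diagram, rule_format, OF bexI[OF _ al(1)]])
    qed
  qed
  finally show ?thesis .
qed

end


context tb begin

definition jm :: "(nat\<times>nat \<Rightarrow> sym) \<Rightarrow> nat\<times>nat \<Rightarrow> nat" where
  "jm T al = (if al \<notin> D then 0 else (case T al of Unpr k \<Rightarrow> n - k | Pr k \<Rightarrow> n + nat (int n - k)))"
definition im :: "(nat\<times>nat \<Rightarrow> nat) \<Rightarrow> nat\<times>nat \<Rightarrow> sym" where
  "im F al = (if al \<notin> D then Unpr 0 else if F al < n then Unpr (n - F al) else Pr (int n - int (F al - n)))"

lemma supU: "reverse_supertableau n lam T \<Longrightarrow> al \<in> D \<Longrightarrow> T al = Unpr k \<Longrightarrow> 1 \<le> k \<and> k \<le> n"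
proof -
  assume "reverse_supertableau n lam T" "al \<in> D" "T al = Unpr k"
  moreover have "\<forall>al\<in>D. \<forall>k. T al = Unpr k \<longrightarrow> 1 \<le> k \<and> k \<le> n"
    using calculation(1) unfolding reverse_supertableau_def by (elim conjE)
  ultimately show ?thesis by blast
qed
lemma supP: "reverse_supertableau n lam T \<Longrightarrow> (i,j) \<in> D \<Longrightarrow> T (i,j) = Pr k \<Longrightarrow> k \<le> int n \<and> int (col_len lam j) - int j + 1 \<le> k"
proof -
  assume "reverse_supertableau n lam T" "(i,j) \<in> D" "T (i,j) = Pr k"
  moreover have "\<forall>al\<in>D. \<forall>k. T al = Pr k \<longrightarrow> k \<le> int n"
    using calculation(1) unfolding reverse_supertableau_def by (elim conjE)
  moreover have "\<forall>i j k. (i, j) \<in> D \<longrightarrow> T (i, j) = Pr k \<longrightarrow> int (col_len lam j) - int j + 1 \<le> k"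
    using calculation(1) unfolding reverse_supertableau_def by (elim conjE)
  ultimately show ?thesis by blast
qed
lemma supZ: "reverse_supertableau n lam T \<Longrightarrow> al \<notin> D \<Longrightarrow> T al = Unpr 0"
proof -
  assume "reverse_supertableau n lam T" "al \<notin> D"
  moreover have "\<forall>al. al \<notin> D \<longrightarrow> T al = Unpr 0"
    using calculation(1) unfolding reverse_supertableau_def by (elim conjE)
  ultimately show ?thesis by blast
qed

lemma supP_lower:
  assumes T: "reverse_supertableau n lam T" and d: "(i,j) \<in> D" and p: "T (i,j) = Pr k"
  shows "int i - int j + 1 \<le> k" "- int (sum_list lam) \<le> k"
proof -
  have "i \<le> col_len lam j" using col_len_props[OF part d] by simp
  then show "int i - int j + 1 \<le> k" using supP[OF T d p] by simp
  have "1 \<le> i" "j \<le> sum_list lam" using d col_le_sum[OF d] by (auto simp: diag_mem)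
  then show "- int (sum_list lam) \<le> k" using \<open>int i - int j + 1 \<le> k\<close> by simp
qed

lemma jm_U:
  assumes T: "reverse_supertableau n lam T" and d: "al \<in> D" and u: "T al = Unpr k"
  shows "jm T al = n - k" "n - k < n" "1 \<le> k" "k \<le> n"
  using d u supU[OF T d u] by (auto simp: jm_def)

lemma jm_P:
  assumes T: "reverse_supertableau n lam T" and d: "(i,j) \<in> D" and p: "T (i,j) = Pr k"
  shows "jm T (i,j) = n + nat (int n - k)" "nat (int n - k) < Mk" "k \<le> int n" "int i - int j + 1 \<le> k"
proof -
  show "jm T (i,j) = n + nat (int n - k)" using d p by (simp add: jm_def)
  show "nat (int n - k) < Mk" using supP_lower(2)[OF T d p] supP[OF T d p] by simp
  show "k \<le> int n" using supP[OF T d p] by simp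
  show "int i - int j + 1 \<le> k" using supP_lower(1)[OF T d p] .
qed

end

context tb begin

lemma supRowPU: "reverse_supertableau n lam T \<Longrightarrow> (i,j)\<in>D \<Longrightarrow> (i,j')\<in>D \<Longrightarrow> T (i,j) = Pr k \<Longrightarrow> T (i,j') = Unpr k' \<Longrightarrow> j' < j"
proof -
  assume T: "reverse_supertableau n lam T" and h: "(i,j)\<in>D" "(i,j')\<in>D" "T (i,j) = Pr k" "T (i,j') = Unpr k'"
  have "\<forall>i j j' k k'. (i, j) \<in> D \<longrightarrow> (i, j') \<in> D \<longrightarrow> T (i, j) = Pr k \<longrightarrow> T (i, j') = Unpr k' \<longrightarrow> j' < j"
    using T unfolding reverse_supertableau_def by (elim conjE)
  then show ?thesis using h by blast
qed
lemma supColPU: "reverse_supertableau n lam T \<Longrightarrow> (i,j)\<in>D \<Longrightarrow> (i',j)\<in>D \<Longrightarrow> T (i,j) = Pr k \<Longrightarrow> T (i',j) = Unpr k' \<Longrightarrow> i' < i"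
proof -
  assume T: "reverse_supertableau n lam T" and h: "(i,j)\<in>D" "(i',j)\<in>D" "T (i,j) = Pr k" "T (i',j) = Unpr k'"
  have "\<forall>i i' j k k'. (i, j) \<in> D \<longrightarrow> (i', j) \<in> D \<longrightarrow> T (i, j) = Pr k \<longrightarrow> T (i', j) = Unpr k' \<longrightarrow> i' < i"
    using T unfolding reverse_supertableau_def by (elim conjE)
  then show ?thesis using h by blast
qed
lemma supRowUU: "reverse_supertableau n lam T \<Longrightarrow> (i,j)\<in>D \<Longrightarrow> (i,j')\<in>D \<Longrightarrow> j < j' \<Longrightarrow> T (i,j) = Unpr k \<Longrightarrow> T (i,j') = Unpr k' \<Longrightarrow> k' \<le> k"
proof -
  assume T: "reverse_supertableau n lam T" and h: "(i,j)\<in>D" "(i,j')\<in>D" "j < j'" "T (i,j) = Unpr k" "T (i,j') = Unpr k'"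
  have "\<forall>i j j' k k'. (i, j) \<in> D \<longrightarrow> (i, j') \<in> D \<longrightarrow> j < j' \<longrightarrow> T (i, j) = Unpr k \<longrightarrow> T (i, j') = Unpr k' \<longrightarrow> k' \<le> k"
    using T unfolding reverse_supertableau_def by (elim conjE)
  then show ?thesis using h by blast
qed
lemma supColUU: "reverse_supertableau n lam T \<Longrightarrow> (i,j)\<in>D \<Longrightarrow> (i',j)\<in>D \<Longrightarrow> i < i' \<Longrightarrow> T (i,j) = Unpr k \<Longrightarrow> T (i',j) = Unpr k' \<Longrightarrow> k' < k"
proof -
  assume T: "reverse_supertableau n lam T" and h: "(i,j)\<in>D" "(i',j)\<in>D" "i < i'" "T (i,j) = Unpr k" "T (i',j) = Unpr k'"
  have "\<forall>i i' j k k'. (i, j) \<in> D \<longrightarrow> (i', j) \<in> D \<longrightarrow> i < i' \<longrightarrow> T (i, j) = Unpr k \<longrightarrow> T (i', j) = Unpr k' \<longrightarrow> k' < k"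
    using T unfolding reverse_supertableau_def by (elim conjE)
  then show ?thesis using h by blast
qed
lemma supRowPP: "reverse_supertableau n lam T \<Longrightarrow> (i,j)\<in>D \<Longrightarrow> (i,j')\<in>D \<Longrightarrow> j < j' \<Longrightarrow> T (i,j) = Pr k \<Longrightarrow> T (i,j') = Pr k' \<Longrightarrow> k' < k"
proof -
  assume T: "reverse_supertableau n lam T" and h: "(i,j)\<in>D" "(i,j')\<in>D" "j < j'" "T (i,j) = Pr k" "T (i,j') = Pr k'"
  have "\<forall>i j j' k k'. (i, j) \<in> D \<longrightarrow> (i, j') \<in> D \<longrightarrow> j < j' \<longrightarrow> T (i, j) = Pr k \<longrightarrow> T (i, j') = Pr k' \<longrightarrow> k' < k"
    using T unfolding reverse_supertableau_def by (elim conjE)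
  then show ?thesis using h by blast
qed
lemma supColPP: "reverse_supertableau n lam T \<Longrightarrow> (i,j)\<in>D \<Longrightarrow> (i',j)\<in>D \<Longrightarrow> i < i' \<Longrightarrow> T (i,j) = Pr k \<Longrightarrow> T (i',j) = Pr k' \<Longrightarrow> k' \<le> k"
proof -
  assume T: "reverse_supertableau n lam T" and h: "(i,j)\<in>D" "(i',j)\<in>D" "i < i'" "T (i,j) = Pr k" "T (i',j) = Pr k'"
  have "\<forall>i i' j k k'. (i, j) \<in> D \<longrightarrow> (i', j) \<in> D \<longrightarrow> i < i' \<longrightarrow> T (i, j) = Pr k \<longrightarrow> T (i', j) = Pr k' \<longrightarrow> k' \<le> k"
    using T unfolding reverse_supertableau_def by (elim conjE)
  then show ?thesis using h by blast
qed

lemma fstX: "q < n \<Longrightarrow> fst (Ls ! q)" using LsX by simp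
lemma fstY: "n \<le> q \<Longrightarrow> q < n + Mk \<Longrightarrow> \<not> fst (Ls ! q)" using LsY' by simp

lemma jm_valid:
  assumes T: "reverse_supertableau n lam T"
  shows "validF Ls lam (jm T)"
  unfolding validF_def
proof (intro conjI allI impI ballI)
  fix al assume "al \<notin> D" then show "jm T al = 0" by (simp add: jm_def)
next
  fix al assume d: "al \<in> D"
  obtain i j where ij: "al = (i,j)" by (cases al)
  show "jm T al < length Ls"
  proof (cases "T al")
    case (Unpr k) then show ?thesis using jm_U[OF T d Unpr] lenL by simp
  next
    case (Pr k) then show ?thesis using jm_P[OF T d[unfolded ij]] ij lenL by simp
  qed
next
  fix i j j' assume h: "(i,j)\<in>D" "(i,j')\<in>D" "j < j'"
  show "rowok Ls (jm T (i,j)) (jm T (i,j'))"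
  proof (cases "T (i,j)")
    case u1: (Unpr k)
    note a = jm_U[OF T h(1) u1]
    show ?thesis
    proof (cases "T (i,j')")
      case u2: (Unpr k')
      note b = jm_U[OF T h(2) u2]
      have "k' \<le> k" using supRowUU[OF T h u1 u2] .
      then show ?thesis using a b fstX by (auto simp: rowok_def)
    next
      case p2: (Pr k')
      note b = jm_P[OF T h(2) p2]
      show ?thesis using a b by (auto simp: rowok_def)
    qed
  next
    case p1: (Pr k)
    note a = jm_P[OF T h(1) p1]
    show ?thesis
    proof (cases "T (i,j')")
      case u2: (Unpr k')
      have "j' < j" using supRowPU[OF T h(1,2) p1 u2] .
      then show ?thesis using h by simp
    next
      case p2: (Pr k')
      note b = jm_P[OF T h(2) p2]
      have "k' < k" using supRowPP[OF T h p1 p2] .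
      then show ?thesis using a b by (auto simp: rowok_def)
    qed
  qed
next
  fix i i' j assume h: "(i,j)\<in>D" "(i',j)\<in>D" "i < i'"
  show "colok Ls (jm T (i,j)) (jm T (i',j))"
  proof (cases "T (i,j)")
    case u1: (Unpr k)
    note a = jm_U[OF T h(1) u1]
    show ?thesis
    proof (cases "T (i',j)")
      case u2: (Unpr k')
      note b = jm_U[OF T h(2) u2]
      have "k' < k" using supColUU[OF T h u1 u2] .
      then show ?thesis using a b by (auto simp: colok_def)
    next
      case p2: (Pr k')
      note b = jm_P[OF T h(2) p2]
      show ?thesis using a b by (auto simp: colok_def)
    qed
  next
    case p1: (Pr k)
    note a = jm_P[OF T h(1) p1]
    show ?thesis
    proof (cases "T (i',j)")
      case u2: (Unpr k')
      have "i' < i" using supColPU[OF T h(1,2) p1 u2] .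
      then show ?thesis using h by simp
    next
      case p2: (Pr k')
      note b = jm_P[OF T h(2) p2]
      have "k' \<le> k" using supColPP[OF T h p1 p2] .
      then have "jm T (i,j) \<le> jm T (i',j)" using a b by simp
      moreover have "\<not> fst (Ls ! jm T (i,j))" using a fstY by simp
      ultimately show ?thesis by (auto simp: colok_def)
    qed
  qed
qed

lemma jm_good:
  assumes T: "reverse_supertableau n lam T"
  shows "good (jm T)"
  unfolding good_def
proof (intro ballI impI)
  fix al assume d: "al \<in> D" and ge: "n \<le> jm T al"
  obtain i j where ij: "al = (i,j)" by (cases al)
  show "1 - (int n - int (jm T al - n)) \<le> content al"
  proof (cases "T al")
    case (Unpr k) then show ?thesis using jm_U[OF T d Unpr] ge by simp
  next
    case (Pr k)
    note b = jm_P[OF T d[unfolded ij] Pr[unfolded ij]]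
    then show ?thesis using ij by (simp add: content_def)
  qed
qed

end

context tb begin

lemma im_super:
  assumes F: "validF Ls lam F" and g: "good F"
  shows "reverse_supertableau n lam (im F)"
proof -
  have z: "al \<notin> D \<Longrightarrow> F al = 0" for al
    using F unfolding validF_def by blast
  have r: "al \<in> D \<Longrightarrow> F al < n + Mk" for al
    using F lenL unfolding validF_def by auto
  have row: "(i,j)\<in>D \<Longrightarrow> (i,j')\<in>D \<Longrightarrow> j < j' \<Longrightarrow> rowok Ls (F (i,j)) (F (i,j'))" for i j j'
    using F unfolding validF_def by blast
  have col: "(i,j)\<in>D \<Longrightarrow> (i',j)\<in>D \<Longrightarrow> i < i' \<Longrightarrow> colok Ls (F (i,j)) (F (i',j))" for i i' j
    using F unfolding validF_def by blast
  have imU: "al \<in> D \<Longrightarrow> im F al = Unpr k \<longleftrightarrow> F al < n \<and> k = n - F al" for al k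
    by (auto simp: im_def)
  have imP: "al \<in> D \<Longrightarrow> im F al = Pr k \<longleftrightarrow> n \<le> F al \<and> k = int n - int (F al - n)" for al k
    by (auto simp: im_def)
  show ?thesis
    unfolding reverse_supertableau_def
  proof (intro conjI allI impI ballI)
    fix al assume "al \<notin> D" then show "im F al = Unpr 0" by (simp add: im_def)
  next
    fix al k assume "al \<in> D" "im F al = Unpr k"
    then show "1 \<le> k" "k \<le> n" using imU by auto
  next
    fix al k assume "al \<in> D" "im F al = Pr k"
    then show "k \<le> int n" using imP by auto
  next
    fix i j j' k k' assume h: "(i,j)\<in>D" "(i,j')\<in>D" "im F (i,j) = Pr k" "im F (i,j') = Unpr k'"
    then have a: "n \<le> F (i,j)" "F (i,j') < n" using imP imU by blast+
    show "j' < j"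
    proof (rule ccontr)
      assume "\<not> j' < j"
      then have "j < j' \<or> j = j'" by auto
      then show False
      proof
        assume "j < j'" then have "F (i,j) \<le> F (i,j')" using row h by (auto simp: rowok_def)
        then show False using a by simp
      next
        assume "j = j'" then show False using a by simp
      qed
    qed
  next
    fix i i' j k k' assume h: "(i,j)\<in>D" "(i',j)\<in>D" "im F (i,j) = Pr k" "im F (i',j) = Unpr k'"
    then have a: "n \<le> F (i,j)" "F (i',j) < n" using imP imU by blast+
    show "i' < i"
    proof (rule ccontr)
      assume "\<not> i' < i"
      then have "i < i' \<or> i = i'" by auto
      then show False
      proof
        assume "i < i'" then have "F (i,j) \<le> F (i',j)" using col h by (auto simp: colok_def)
        then show False using a by simp
      next
        assume "i = i'" then show False using a by simp
      qed
    qed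
  next
    fix i j j' k k' assume h: "(i,j)\<in>D" "(i,j')\<in>D" "j < j'" "im F (i,j) = Unpr k" "im F (i,j') = Unpr k'"
    then have a: "F (i,j) < n" "k = n - F (i,j)" "F (i,j') < n" "k' = n - F (i,j')" using imU by blast+
    have "F (i,j) \<le> F (i,j')" using row h by (auto simp: rowok_def)
    then show "k' \<le> k" using a by simp
  next
    fix i i' j k k' assume h: "(i,j)\<in>D" "(i',j)\<in>D" "i < i'" "im F (i,j) = Unpr k" "im F (i',j) = Unpr k'"
    then have a: "F (i,j) < n" "k = n - F (i,j)" "F (i',j) < n" "k' = n - F (i',j)" using imU by blast+
    have "colok Ls (F (i,j)) (F (i',j))" using col h by blast
    then have "F (i,j) < F (i',j)" using fstX[OF a(1)] unfolding colok_def by (metis le_neq_implies_less)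
    then show "k' < k" using a by simp
  next
    fix i j j' k k' assume h: "(i,j)\<in>D" "(i,j')\<in>D" "j < j'" "im F (i,j) = Pr k" "im F (i,j') = Pr k'"
    then have a: "n \<le> F (i,j)" "k = int n - int (F (i,j) - n)" "n \<le> F (i,j')" "k' = int n - int (F (i,j') - n)"
      using imP by blast+
    have "rowok Ls (F (i,j)) (F (i,j'))" using row h by blast
    then have "F (i,j) < F (i,j')" using fstY[OF a(1) r[OF h(1)]] unfolding rowok_def by (metis le_neq_implies_less)
    then show "k' < k" using a by simp
  next
    fix i i' j k k' assume h: "(i,j)\<in>D" "(i',j)\<in>D" "i < i'" "im F (i,j) = Pr k" "im F (i',j) = Pr k'"
    then have a: "n \<le> F (i,j)" "k = int n - int (F (i,j) - n)" "n \<le> F (i',j)" "k' = int n - int (F (i',j) - n)"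
      using imP by blast+
    have "F (i,j) \<le> F (i',j)" using col h by (auto simp: colok_def)
    then show "k' \<le> k" using a by simp
  next
    fix i j k assume h: "(i,j)\<in>D" "im F (i,j) = Pr k"
    then have a: "n \<le> F (i,j)" "k = int n - int (F (i,j) - n)" using imP by blast+
    define L where "L = col_len lam j"
    have L: "i \<le> L" "(L,j) \<in> D" using col_len_props[OF part h(1)] by (auto simp: L_def)
    have le: "F (i,j) \<le> F (L,j)"
    proof (cases "i = L")
      case False then have "i < L" using L by simp
      then show ?thesis using col[OF h(1) L(2)] by (simp add: colok_def)
    qed simp
    have "1 - (int n - int (F (L,j) - n)) \<le> content (L,j)"
      using g L(2) le a(1) unfolding good_def by auto
    then show "int (col_len lam j) - int j + 1 \<le> k"
      using a le by (simp add: content_def L_def[symmetric])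
  qed
qed

lemma transB:
  "(\<Sum>T\<in>{T. reverse_supertableau n lam T}. \<Prod>al\<in>D. sym_weight x a (T al)) = SF Ls lam"
proof -
  have "(\<Sum>T\<in>{T. reverse_supertableau n lam T}. \<Prod>al\<in>D. sym_weight x a (T al)) =
        (\<Sum>F\<in>{F. validF Ls lam F \<and> good F}. wtF Ls lam F)"
  proof (rule sum.reindex_bij_witness[where i=im and j=jm])
    fix T assume "T \<in> {T. reverse_supertableau n lam T}"
    then have T: "reverse_supertableau n lam T" by simp
    show "im (jm T) = T"
    proof
      fix al show "im (jm T) al = T al"
      proof (cases "al \<in> D")
        case False then show ?thesis using supZ[OF T False] by (simp add: im_def)
      next
        case True
        obtain i j where ij: "al = (i,j)" by (cases al)
        show ?thesis
        proof (cases "T al")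
          case (Unpr k) then show ?thesis using jm_U[OF T True Unpr] True by (simp add: im_def)
        next
          case (Pr k) then show ?thesis using jm_P[OF T True[unfolded ij] Pr[unfolded ij]] True ij
            by (simp add: im_def)
        qed
      qed
    qed
    show "jm T \<in> {F. validF Ls lam F \<and> good F}" using jm_valid[OF T] jm_good[OF T] by simp
    show "wtF Ls lam (jm T) = (\<Prod>al\<in>D. sym_weight x a (T al))"
      unfolding wtF_def
    proof (rule prod.cong[OF refl])
      fix al assume d: "al \<in> D"
      obtain i j where ij: "al = (i,j)" by (cases al)
      show "snd (Ls ! jm T al) (content al) = sym_weight x a (T al)"
      proof (cases "T al")
        case (Unpr k)
        note b = jm_U[OF T d Unpr]
        then show ?thesis using LsX[OF b(2)] Unpr by (simp add: sym_weight_def)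
      next
        case (Pr k)
        note b = jm_P[OF T d[unfolded ij] Pr[unfolded ij]]
        have "int n - int (nat (int n - k)) = k" using b(3) by simp
        then show ?thesis using LsY[OF b(2)] b Pr ij by (simp add: sym_weight_def content_def)
      qed
    qed
  next
    fix F assume "F \<in> {F. validF Ls lam F \<and> good F}"
    then have F: "validF Ls lam F" and g: "good F" by auto
    have z: "al \<notin> D \<Longrightarrow> F al = 0" for al using F unfolding validF_def by blast
    show "jm (im F) = F"
    proof
      fix al show "jm (im F) al = F al"
      proof (cases "al \<in> D")
        case False then show ?thesis using z[OF False] by (simp add: jm_def)
      next
        case True then show ?thesis by (auto simp: jm_def im_def)
      qed
    qed
    show "im F \<in> {T. reverse_supertableau n lam T}" using im_super[OF F g] by simp
  qed
  also have "\<dots> = SF Ls lam" using step1 by simp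
  finally show ?thesis .
qed

end

theorem main_thm:
  fixes n :: nat and lam :: "nat list"
    and x :: "nat \<Rightarrow> 'r::comm_ring_1" and a :: "int \<Rightarrow> 'r"
  assumes "is_partition lam"
  shows "double_schur n lam x a =
    (\<Sum>T\<in>{T. reverse_supertableau n lam T}. \<Prod>\<alpha>\<in>diagram lam. sym_weight x a (T \<alpha>))"
proof -
  interpret tb n lam x a by unfold_locales (rule assms)
  have "(\<Sum>T\<in>{T. reverse_supertableau n lam T}. \<Prod>\<alpha>\<in>diagram lam. sym_weight x a (T \<alpha>)) = SF Ls lam"
    by (rule transB)
  moreover have "SF Ls lam = double_schur n lam x a" unfolding Ls_def by (rule assemble[OF assms])
  ultimately show ?thesis by simp
qed


theorem corollary4p2:
  fixes n :: nat and lam :: "nat list"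
    and x :: "nat \<Rightarrow> 'r::comm_ring_1" and a :: "int \<Rightarrow> 'r"
  assumes "1 \<le> n" and "is_partition lam" and "length lam \<le> n"
  shows "double_schur n lam x a =
    (\<Sum>T\<in>{T. reverse_supertableau n lam T}. \<Prod>\<alpha>\<in>diagram lam. sym_weight x a (T \<alpha>))"
  by (rule main_thm[OF assms(2)])

end
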